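(* Assume the Standing Setting. Then (i) for every $k\in\mathbb{N}\cap(Hd+H,\mathfrak d]$ the map $\mathbb{R}^{\mathfrak d}\ni\theta\mapsto\mathcal G_k(\theta)\in\mathbb{R}$ is locally Lipschitz continuous; (ii) for every $i\in\{1,\dots,H\}$, $j\in\{1,\dots,d\}$ the map $\{\vartheta\in\mathbb{R}^{\mathfrak d}\colon i\notin\mathbf D^\vartheta\}\ni\theta\mapsto\mathcal G_{(i-1)d+j}(\theta)\in\mathbb{R}$ is locally Lipschitz continuous; and (iii) for every $i\in\{1,\dots,H\}$ the map $\{\vartheta\in\mathbb{R}^{\mathfrak d}\colon i\notin\mathbf D^\vartheta\}\ni\theta\mapsto\mathcal G_{Hd+i}(\theta)\in\mathbb{R}$ is locally Lipschitz continuous.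
   Context: Standing Setting: Let $d,H,\mathfrak d\in\mathbb{N}$ with $\mathfrak d=dH+2H+1$, let $a\in\mathbb{R}$, $b\in(a,\infty)$, $f\in C([a,b]^d,\mathbb{R})$, and let $p\colon[a,b]^d\to[0,\infty)$ be bounded and measurable. Let $\lambda$ be Lebesgue measure on $\mathbb{R}^d$ and $\|\cdot\|$ the Euclidean norm. For $\theta=(\theta_1,\dots,\theta_{\mathfrak d})\in\mathbb{R}^{\mathfrak d}$, $i\in\{1,\dots,H\}$, $j\in\{1,\dots,d\}$ write $w^\theta_{i,j}=\theta_{(i-1)d+j}$, $b^\theta_i=\theta_{Hd+i}$, $v^\theta_i=\theta_{H(d+1)+i}$, $c^\theta=\theta_{\mathfrak d}$. Define $\mathcal N^\theta(x)=c^\theta+\sum_{i=1}^H v^\theta_i\max\{b^\theta_i+\sum_{j=1}^d w^\theta_{i,j}x_j,0\}$ for $x\in\mathbb{R}^d$ and the risk $\mathcal L(\theta)=\int_{[a,b]^d}(f(y)-\mathcal N^\theta(y))^2p(y)\,\lambda(\mathrm{d}y)$. Let $\mathfrak R_r\in C^1(\mathbb{R},\mathbb{R})$, $r\in\mathbb{N}$, satisfy for all $x\in\mathbb{R}$ that $\lim_{r\to\infty}\big(|\mathfrak R_r(x)-\max\{x,0\}|+|(\mathfrak R_r)'(x)-\mathbb 1_{(0,\infty)}(x)|\big)=0$ and $\sup_{r\in\mathbb{N}}\sup_{y\in[-|x|,|x|]}|(\mathfrak R_r)'(y)|<\infty$, and let $\mathfrak L_r(\theta)=\int_{[a,b]^d}\big(f(y)-c^\theta-\sum_{i=1}^H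 v^\theta_i\,\mathfrak R_r(b^\theta_i+\sum_{j=1}^d w^\theta_{i,j}y_j)\big)^2p(y)\,\lambda(\mathrm{d}y)$. Let $\mathcal G=(\mathcal G_1,\dots,\mathcal G_{\mathfrak d})\colon\mathbb{R}^{\mathfrak d}\to\mathbb{R}^{\mathfrak d}$ satisfy $\mathcal G(\theta)=\lim_{r\to\infty}(\nabla\mathfrak L_r)(\theta)$ for every $\theta$ at which this limit exists. For $\theta\in\mathbb{R}^{\mathfrak d}$, $i\in\{1,\dots,H\}$ let $I_i^\theta=\{x\in[a,b]^d\colon b^\theta_i+\sum_{j=1}^d w^\theta_{i,j}x_j>0\}$ and let $\mathbf D^\theta=\{i\in\{1,\dots,H\}\colon |b^\theta_i|+\sum_{j=1}^d|w^\theta_{i,j}|=0\}$ (the set of degenerate hidden neurons). For $\varepsilon>0$, $B_\varepsilon(\theta)=\{\vartheta\in\mathbb{R}^{\mathfrak d}\colon\|\theta-\vartheta\|<\varepsilon\}$. (Known fact used in the paper: the limit defining $\mathcal G$ exists for all $\theta$, and $\mathcal G_{(i-1)d+j}(\theta)=2v^\theta_i\int_{I_i^\theta}x_j(\mathcal N^\theta(x)-f(x))p(x)\,\lambda(\mathrm dx)$, $\mathcal G_{Hd+i}(\theta)=2v^\theta_i\int_{I_i^\theta}(\mathcal N^\theta(x)-f(x))p(x)\,\lambda(\mathrm dx)$, $\mathcal G_{H(d+1)+i}(\theta)=2\int_{[a,b]^d}\max\{b^\theta_i+\sum_j w^\theta_{i,j}x_j,0\}(\mathcal N^\theta(x)-f(x))p(x)\,\lambda(\mathrm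 dx)$, $\mathcal G_{\mathfrak d}(\theta)=2\int_{[a,b]^d}(\mathcal N^\theta(x)-f(x))p(x)\,\lambda(\mathrm dx)$.) *)

theory Defs
  imports "HOL-Analysis.Analysis"
begin

text \<open>Parameter vectors theta in R^dd are represented as functions nat => real,
  with coordinates 1..dd; all other coordinates are fixed to 0.
  Inputs x in R^d are extensional functions on {1..d} (product measure space).\<close>

definition pdim :: "nat \<Rightarrow> nat \<Rightarrow> nat" where
  "pdim d H = d * H + 2 * H + 1"

definition param_space :: "nat \<Rightarrow> nat \<Rightarrow> (nat \<Rightarrow> real) set" where
  "param_space d H = {\<theta>. \<forall>k. k \<notin> {1..pdim d H} \<longrightarrow> \<theta> k = 0}"

definition pnorm_dist :: "nat \<Rightarrow> nat \<Rightarrow> (nat \<Rightarrow> real) \<Rightarrow> (nat \<Rightarrow> real) \<Rightarrow> real" where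
  "pnorm_dist d H \<theta> \<phi> = sqrt (\<Sum>k=1..pdim d H. (\<theta> k - \<phi> k)^2)"

definition wgt :: "nat \<Rightarrow> (nat \<Rightarrow> real) \<Rightarrow> nat \<Rightarrow> nat \<Rightarrow> real" where
  "wgt d \<theta> i j = \<theta> ((i - 1) * d + j)"

definition bia :: "nat \<Rightarrow> nat \<Rightarrow> (nat \<Rightarrow> real) \<Rightarrow> nat \<Rightarrow> real" where
  "bia d H \<theta> i = \<theta> (H * d + i)"

definition outw :: "nat \<Rightarrow> nat \<Rightarrow> (nat \<Rightarrow> real) \<Rightarrow> nat \<Rightarrow> real" where
  "outw d H \<theta> i = \<theta> (H * (d + 1) + i)"

definition outb :: "nat \<Rightarrow> nat \<Rightarrow> (nat \<Rightarrow> real) \<Rightarrow> real" where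
  "outb d H \<theta> = \<theta> (pdim d H)"

definition cube :: "nat \<Rightarrow> real \<Rightarrow> real \<Rightarrow> (nat \<Rightarrow> real) set" where
  "cube d a b = PiE {1..d} (\<lambda>_. {a..b})"

definition leb :: "nat \<Rightarrow> (nat \<Rightarrow> real) measure" where
  "leb d = completion (PiM {1..d} (\<lambda>_. lborel))"

definition net_act :: "(real \<Rightarrow> real) \<Rightarrow> nat \<Rightarrow> nat \<Rightarrow> (nat \<Rightarrow> real) \<Rightarrow> (nat \<Rightarrow> real) \<Rightarrow> real" where
  "net_act \<sigma> d H \<theta> x = outb d H \<theta> +
     (\<Sum>i=1..H. outw d H \<theta> i * \<sigma> (bia d H \<theta> i + (\<Sum>j=1..d. wgt d \<theta> i j * x j)))"

definition relu_net :: "nat \<Rightarrow> nat \<Rightarrow> (nat \<Rightarrow> real) \<Rightarrow> (nat \<Rightarrow> real) \<Rightarrow> real" where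
  "relu_net d H \<theta> x = net_act (\<lambda>y. max y 0) d H \<theta> x"

definition risk_act :: "(real \<Rightarrow> real) \<Rightarrow> nat \<Rightarrow> nat \<Rightarrow> real \<Rightarrow> real \<Rightarrow>
    ((nat \<Rightarrow> real) \<Rightarrow> real) \<Rightarrow> ((nat \<Rightarrow> real) \<Rightarrow> real) \<Rightarrow> (nat \<Rightarrow> real) \<Rightarrow> real" where
  "risk_act \<sigma> d H a b f p \<theta> =
     (LINT y : cube d a b | leb d. (f y - net_act \<sigma> d H \<theta> y)^2 * p y)"

definition degenerate :: "nat \<Rightarrow> nat \<Rightarrow> (nat \<Rightarrow> real) \<Rightarrow> nat set" where
  "degenerate d H \<theta> = {i \<in> {1..H}. \<bar>bia d H \<theta> i\<bar> + (\<Sum>j=1..d. \<bar>wgt d \<theta> i j\<bar>) = 0}"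

definition loc_lipschitz :: "nat \<Rightarrow> nat \<Rightarrow> (nat \<Rightarrow> real) set \<Rightarrow> ((nat \<Rightarrow> real) \<Rightarrow> real) \<Rightarrow> bool" where
  "loc_lipschitz d H S F \<longleftrightarrow>
     (\<forall>\<theta>\<in>S. \<exists>\<epsilon>>0. \<exists>L. \<forall>\<theta>1\<in>S. \<forall>\<theta>2\<in>S.
        pnorm_dist d H \<theta> \<theta>1 < \<epsilon> \<longrightarrow> pnorm_dist d H \<theta> \<theta>2 < \<epsilon> \<longrightarrow>
        \<bar>F \<theta>1 - F \<theta>2\<bar> \<le> L * pnorm_dist d H \<theta>1 \<theta>2)"

end

theory Submission
  imports Defs
begin


lemma mvt_bound:
  fixes g g' :: "real \<Rightarrow> real"
  assumes der: "\<And>t. (g has_real_derivative g' t) (at t)"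
    and bnd: "\<And>t. \<bar>t\<bar> \<le> 1 \<Longrightarrow> \<bar>g' t\<bar> \<le> B"
    and s: "\<bar>s\<bar> \<le> 1"
  shows "\<bar>g s - g 0\<bar> \<le> B * \<bar>s\<bar>"
proof (cases "s = 0")
  case True then show ?thesis by simp
next
  case False
  show ?thesis
  proof (cases "s > 0")
    case True
    from MVT2[of 0 s g g'] True der obtain z where z: "0 < z" "z < s" "g s - g 0 = (s - 0) * g' z" by auto
    have "\<bar>g' z\<bar> \<le> B" using bnd z s by auto
    then show ?thesis using z True by (simp add: abs_mult mult.commute mult_left_mono)
  next
    case False
    with \<open>s \<noteq> 0\<close> have "s < 0" by simp
    from MVT2[of s 0 g g'] this der obtain z where z: "s < z" "z < 0" "g 0 - g s = (0 - s) * g' z" by auto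
    have "\<bar>g' z\<bar> \<le> B" using bnd z s by auto
    then have "\<bar>g 0 - g s\<bar> \<le> B * \<bar>s\<bar>" using z by (simp add: abs_mult mult.commute mult_left_mono)
    then show ?thesis by simp
  qed
qed

lemma deriv_integral:
  fixes \<phi> \<phi>' :: "real \<Rightarrow> 'a \<Rightarrow> real" and w :: "'a \<Rightarrow> real"
  assumes meas: "\<And>t. \<phi> t \<in> borel_measurable M" and meas': "\<phi>' 0 \<in> borel_measurable M"
    and der: "\<And>x t. x \<in> space M \<Longrightarrow> ((\<lambda>s. \<phi> s x) has_real_derivative \<phi>' t x) (at t)"
    and bnd: "\<And>x t. x \<in> space M \<Longrightarrow> \<bar>t\<bar> \<le> 1 \<Longrightarrow> \<bar>\<phi>' t x\<bar> \<le> w x"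
    and intw: "integrable M w" and int0: "integrable M (\<phi> 0)"
  shows "((\<lambda>t. integral\<^sup>L M (\<phi> t)) has_real_derivative integral\<^sup>L M (\<phi>' 0)) (at 0)"
proof -
  have dif: "\<bar>\<phi> s x - \<phi> 0 x\<bar> \<le> w x * \<bar>s\<bar>" if "x \<in> space M" "\<bar>s\<bar> \<le> 1" for x s
    using mvt_bound[of "\<lambda>s. \<phi> s x" "\<lambda>t. \<phi>' t x" "w x" s] der bnd that by auto
  have intt: "integrable M (\<phi> t)" if t: "\<bar>t\<bar> \<le> 1" for t
  proof -
    have "integrable M (\<lambda>x. \<phi> t x - \<phi> 0 x)"
    proof (rule Bochner_Integration.integrable_bound[where f="\<lambda>x. w x * \<bar>t\<bar>"])
      show "integrable M (\<lambda>x. w x * \<bar>t\<bar>)" using intw by simp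
      show "(\<lambda>x. \<phi> t x - \<phi> 0 x) \<in> borel_measurable M" using meas by measurable
      show "AE x in M. norm (\<phi> t x - \<phi> 0 x) \<le> norm (w x * \<bar>t\<bar>)"
        using dif t by (auto intro!: AE_I2 simp: abs_mult intro: order_trans[OF _ mult_right_mono[OF abs_ge_self]])
    qed
    then have "integrable M (\<lambda>x. (\<phi> t x - \<phi> 0 x) + \<phi> 0 x)" using int0 by (rule Bochner_Integration.integrable_add)
    then show ?thesis by simp
  qed
  show ?thesis
    unfolding has_field_derivative_iff tendsto_at_iff_sequentially
  proof (intro allI impI)
    fix X :: "nat \<Rightarrow> real" assume X: "\<forall>i. X i \<in> UNIV - {0}" "X \<longlonglongrightarrow> 0"
    then obtain N where N: "\<And>n. n \<ge> N \<Longrightarrow> \<bar>X n\<bar> \<le> 1"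
      by (metis (no_types, lifting) LIMSEQ_D diff_zero real_norm_def zero_less_one less_imp_le)
    define s where "s n x = (\<phi> (X (n + N)) x - \<phi> 0 x) / (X (n + N) - 0)" for n x
    have lim: "(\<lambda>n. integral\<^sup>L M (s n)) \<longlonglongrightarrow> integral\<^sup>L M (\<phi>' 0)"
    proof (rule integral_dominated_convergence[where w=w])
      show "\<phi>' 0 \<in> borel_measurable M" by fact
      show "s n \<in> borel_measurable M" for n unfolding s_def using meas by measurable
      show "integrable M w" by fact
      show "AE x in M. (\<lambda>n. s n x) \<longlonglongrightarrow> \<phi>' 0 x"
      proof (rule AE_I2)
        fix x assume x: "x \<in> space M"
        have "((\<lambda>y. (\<phi> y x - \<phi> 0 x) / (y - 0)) \<longlongrightarrow> \<phi>' 0 x) (at 0)"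
          using der[OF x, of 0] unfolding has_field_derivative_iff .
        then have "((\<lambda>y. (\<phi> y x - \<phi> 0 x) / (y - 0)) \<circ> X) \<longlonglongrightarrow> \<phi>' 0 x"
          using X unfolding tendsto_at_iff_sequentially by blast
        then show "(\<lambda>n. s n x) \<longlonglongrightarrow> \<phi>' 0 x"
          unfolding s_def using LIMSEQ_ignore_initial_segment by (fastforce simp: o_def)
      qed
      show "AE x in M. norm (s n x) \<le> w x" for n
      proof (rule AE_I2)
        fix x assume x: "x \<in> space M"
        have ne: "X (n + N) \<noteq> 0" using X by auto
        have "\<bar>\<phi> (X (n+N)) x - \<phi> 0 x\<bar> \<le> w x * \<bar>X (n+N)\<bar>" using dif[OF x N[of "n+N"]] by simp
        then show "norm (s n x) \<le> w x" unfolding s_def using ne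
          by (simp add: abs_divide divide_le_eq)
      qed
    qed
    have eq: "integral\<^sup>L M (s n) = ((\<lambda>y. (integral\<^sup>L M (\<phi> y) - integral\<^sup>L M (\<phi> 0)) / (y - 0)) \<circ> X) (n + N)" for n
    proof -
      have "integrable M (\<phi> (X (n+N)))" using intt N[of "n+N"] by simp
      then show ?thesis unfolding s_def using int0
        by (simp add: o_def)
    qed
    show "((\<lambda>y. (integral\<^sup>L M (\<phi> y) - integral\<^sup>L M (\<phi> 0)) / (y - 0)) \<circ> X) \<longlonglongrightarrow> integral\<^sup>L M (\<phi>' 0)"
      using lim unfolding eq by (rule LIMSEQ_offset)
  qed
qed


interpretation lbp: product_sigma_finite "\<lambda>_::nat. lborel" by standard

lemma space_leb: "space (leb d) = PiE {1..d} (\<lambda>_. UNIV)"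
  by (simp add: leb_def space_PiM)

lemma cube_sets_PiM: "cube d a b \<in> sets (PiM {1..d} (\<lambda>_. lborel))"
  unfolding cube_def by (intro sets_PiM_I_finite) auto

lemma cube_sets: "cube d a b \<in> sets (leb d)"
  using cube_sets_PiM unfolding leb_def by auto

lemma emeasure_cube: "a \<le> b \<Longrightarrow> emeasure (leb d) (cube d a b) = ennreal ((b - a) ^ d)"
  unfolding leb_def using cube_sets_PiM[of d a b]
  by (simp add: lbp.emeasure_PiM cube_def prod_ennreal ennreal_power)

lemma coord_meas: "j \<in> {1..d} \<Longrightarrow> (\<lambda>y. y j) \<in> borel_measurable (leb d)"
  unfolding leb_def by (intro measurable_completion) measurable

lemma meas_PiM_leb: "g \<in> borel_measurable (PiM {1..d} (\<lambda>_. lborel)) \<Longrightarrow> g \<in> borel_measurable (leb d)"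
  unfolding leb_def by (rule measurable_completion)

definition clampf :: "nat \<Rightarrow> real \<Rightarrow> real \<Rightarrow> (nat \<Rightarrow> real) \<Rightarrow> (nat \<Rightarrow> real)" where
  "clampf d a b y = (\<lambda>i. if i \<in> {1..d} then max a (min b (y i)) else undefined)"

lemma clampf_cube: "a \<le> b \<Longrightarrow> clampf d a b y \<in> cube d a b"
  by (auto simp: clampf_def cube_def PiE_iff extensional_def)

lemma clampf_id: "y \<in> cube d a b \<Longrightarrow> clampf d a b y = y"
  by (auto simp: clampf_def cube_def PiE_iff extensional_def fun_eq_iff)

lemma clampf_cont: "continuous_on UNIV (clampf d a b)"
  unfolding clampf_def
proof (intro continuous_on_coordinatewise_then_product)
  fix i
  show "continuous_on UNIV (\<lambda>x. if i \<in> {1..d} then max a (min b (x i)) else undefined)"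
    by (cases "i \<in> {1..d}") (auto intro!: continuous_intros continuous_on_product_coordinates)
qed

lemma clampf_meas: "clampf d a b \<in> borel_measurable (leb d)"
proof -
  have "clampf d a b \<in> borel_measurable (PiM {1..d} (\<lambda>_. lborel))"
  proof (rule measurable_coordinatewise_then_product)
    fix i
    show "(\<lambda>x. clampf d a b x i) \<in> borel_measurable (PiM {1..d} (\<lambda>_. lborel))"
    proof (cases "i \<in> {1..d}")
      case True
      then have "(\<lambda>x. clampf d a b x i) = (\<lambda>x. max a (min b (x i)))" by (simp add: clampf_def)
      then show ?thesis using True by simp
    next
      case False
      then have "(\<lambda>x. clampf d a b x i) = (\<lambda>x. undefined)" by (auto simp add: clampf_def fun_eq_iff)
      then show ?thesis by simp
    qed
  qed
  then show ?thesis by (rule meas_PiM_leb)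
qed

lemma fc_meas:
  assumes "continuous_on (cube d a b) f" "a \<le> b"
  shows "(\<lambda>y. f (clampf d a b y)) \<in> borel_measurable (leb d)"
proof -
  have c: "continuous_on UNIV (\<lambda>y. f (clampf d a b y))"
    by (rule continuous_on_compose2[OF assms(1) clampf_cont]) (use clampf_cube[OF assms(2)] in auto)
  have "(\<lambda>y. f (clampf d a b y)) \<circ> clampf d a b \<in> borel_measurable (leb d)"
    by (rule measurable_comp[OF clampf_meas borel_measurable_continuous_onI[OF c]])
  moreover have "(\<lambda>y. f (clampf d a b y)) \<circ> clampf d a b = (\<lambda>y. f (clampf d a b y))"
    by (simp add: comp_def clampf_id[OF clampf_cube[OF assms(2)]])
  ultimately show ?thesis by simp
qed

lemma fc_bounded:
  fixes f :: "(nat \<Rightarrow> real) \<Rightarrow> real"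
  assumes "continuous_on (cube d a b) f"
  shows "\<exists>M. \<forall>y\<in>cube d a b. \<bar>f y\<bar> \<le> M"
proof -
  have e: "cube d a b = PiE UNIV (\<lambda>i. if i \<in> {1..d} then {a..b} else {undefined})"
    unfolding cube_def by (auto simp: PiE_iff extensional_def split: if_splits)
  have "compactin (product_topology (\<lambda>_. euclidean) UNIV) (cube d a b)"
    unfolding e compactin_PiE by auto
  then have "compact (cube d a b)" by (simp add: euclidean_product_topology)
  then have "compact (f ` cube d a b)" using assms by (intro compact_continuous_image)
  then obtain M where "\<forall>x\<in>f ` cube d a b. norm x \<le> M" using compact_imp_bounded bounded_iff by metis
  then show ?thesis by auto
qed

lemma integrable_cube:
  fixes g :: "(nat \<Rightarrow> real) \<Rightarrow> real"
  assumes "g \<in> borel_measurable (leb d)" "\<And>y. y \<in> cube d a b \<Longrightarrow> \<bar>g y\<bar> \<le> B" "a \<le> b"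
  shows "integrable (leb d) (\<lambda>y. indicator (cube d a b) y * g y)"
  using integrableI_bounded_set_indicator[OF cube_sets assms(1), of a b B] emeasure_cube[OF assms(3)] assms(2)
  by (simp add: ennreal_less_top)


definition zz :: "nat \<Rightarrow> nat \<Rightarrow> (nat \<Rightarrow> real) \<Rightarrow> nat \<Rightarrow> (nat \<Rightarrow> real) \<Rightarrow> real" where
  "zz d H \<theta> i y = bia d H \<theta> i + (\<Sum>j=1..d. wgt d \<theta> i j * y j)"

definition dl :: "nat \<Rightarrow> nat \<Rightarrow> real" where "dl k m = (if m = k then 1 else 0)"

definition netD :: "(real \<Rightarrow> real) \<Rightarrow> (real \<Rightarrow> real) \<Rightarrow> nat \<Rightarrow> nat \<Rightarrow> (nat \<Rightarrow> real) \<Rightarrow> nat \<Rightarrow> (nat \<Rightarrow> real) \<Rightarrow> real" where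
  "netD \<sigma> \<sigma>' d H \<theta> k y = dl k (pdim d H) + (\<Sum>i=1..H. dl k (H*(d+1)+i) * \<sigma> (zz d H \<theta> i y)
      + outw d H \<theta> i * \<sigma>' (zz d H \<theta> i y) * (dl k (H*d+i) + (\<Sum>j=1..d. dl k ((i-1)*d+j) * y j)))"

lemma net_act_zz: "net_act \<sigma> d H \<theta> y = outb d H \<theta> + (\<Sum>i=1..H. outw d H \<theta> i * \<sigma> (zz d H \<theta> i y))"
  by (simp add: net_act_def zz_def)

lemma upd_eq: "(\<theta>(k := \<theta> k + t)) m = \<theta> m + t * dl k m"
  by (simp add: dl_def)

lemma DERIV_sig[derivative_intros]:
  assumes "\<And>x. (\<sigma> has_real_derivative \<sigma>' x) (at x)" "(g has_real_derivative g') (at t)"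
  shows "((\<lambda>t. \<sigma> (g t)) has_real_derivative \<sigma>' (g t) * g') (at t)"
  using DERIV_chain2[OF assms(1) assms(2)] .

lemma zz_deriv:
  "((\<lambda>t. zz d H (\<theta>(k := \<theta> k + t)) i y) has_real_derivative
      (dl k (H*d+i) + (\<Sum>j=1..d. dl k ((i-1)*d+j) * y j))) (at t0)"
  unfolding zz_def bia_def wgt_def upd_eq
  apply (rule DERIV_cong)
   apply (rule DERIV_add DERIV_sum DERIV_mult DERIV_const DERIV_ident)+
  apply simp
  done

lemma net_deriv:
  assumes s: "\<And>x. (\<sigma> has_real_derivative \<sigma>' x) (at x)"
  shows "((\<lambda>t. net_act \<sigma> d H (\<theta>(k := \<theta> k + t)) y) has_real_derivative
            netD \<sigma> \<sigma>' d H (\<theta>(k := \<theta> k + t0)) k y) (at t0)"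
  unfolding net_act_zz netD_def outb_def outw_def
  apply (subst (1 2) upd_eq)
  apply (rule DERIV_cong)
   apply (rule DERIV_add DERIV_sum DERIV_mult DERIV_const DERIV_ident DERIV_sig[OF s] zz_deriv)+
  apply (auto simp: dl_def algebra_simps intro!: sum.cong)
  done


lemma dl_abs: "\<bar>dl k m\<bar> \<le> 1" by (simp add: dl_def)

lemma sum_bound_const:
  fixes g :: "nat \<Rightarrow> real"
  assumes "\<And>i. i \<in> A \<Longrightarrow> \<bar>g i\<bar> \<le> c" "finite A"
  shows "\<bar>sum g A\<bar> \<le> real (card A) * c"
proof -
  have "\<bar>sum g A\<bar> \<le> (\<Sum>i\<in>A. \<bar>g i\<bar>)" by (rule sum_abs)
  also have "\<dots> \<le> (\<Sum>i\<in>A. c)" using assms by (intro sum_mono) auto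
  finally show ?thesis by simp
qed

lemma abs_mult_le:
  fixes u v U V :: real
  shows "\<bar>u\<bar> \<le> U \<Longrightarrow> \<bar>v\<bar> \<le> V \<Longrightarrow> \<bar>u * v\<bar> \<le> U * V"
  by (simp add: abs_mult mult_mono')

lemma zz_bound:
  assumes T: "\<And>m. \<bar>\<theta> m\<bar> \<le> T" and Y: "\<And>j. j \<in> {1..d} \<Longrightarrow> \<bar>y j\<bar> \<le> Y"
  shows "\<bar>zz d H \<theta> i y\<bar> \<le> T + real d * (T * Y)"
proof -
  have "\<bar>(\<Sum>j=1..d. wgt d \<theta> i j * y j)\<bar> \<le> real (card {1..d}) * (T * Y)"
    by (intro sum_bound_const abs_mult_le) (auto simp: wgt_def T Y)
  moreover have "\<bar>bia d H \<theta> i\<bar> \<le> T" by (simp add: bia_def T)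
  ultimately show ?thesis unfolding zz_def by simp
qed

lemma net_bound:
  assumes T: "\<And>m. \<bar>\<theta> m\<bar> \<le> T" and S: "\<And>i. i \<in> {1..H} \<Longrightarrow> \<bar>\<sigma> (zz d H \<theta> i y)\<bar> \<le> S"
  shows "\<bar>net_act \<sigma> d H \<theta> y\<bar> \<le> T + real H * (T * S)"
proof -
  have "\<bar>(\<Sum>i=1..H. outw d H \<theta> i * \<sigma> (zz d H \<theta> i y))\<bar> \<le> real (card {1..H}) * (T * S)"
    by (intro sum_bound_const abs_mult_le) (auto simp: outw_def T S)
  moreover have "\<bar>outb d H \<theta>\<bar> \<le> T" by (simp add: outb_def T)
  ultimately show ?thesis unfolding net_act_zz by simp
qed

lemma netD_bound:
  assumes T: "\<And>m. \<bar>\<theta> m\<bar> \<le> T" and Y: "\<And>j. j \<in> {1..d} \<Longrightarrow> \<bar>y j\<bar> \<le> Y"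
    and S: "\<And>i. i \<in> {1..H} \<Longrightarrow> \<bar>\<sigma> (zz d H \<theta> i y)\<bar> \<le> S"
    and S': "\<And>i. i \<in> {1..H} \<Longrightarrow> \<bar>\<sigma>' (zz d H \<theta> i y)\<bar> \<le> S'"
  shows "\<bar>netD \<sigma> \<sigma>' d H \<theta> k y\<bar> \<le> 1 + real H * (S + T * S' * (1 + real d * Y))"
proof -
  have inner: "\<bar>dl k (H*d+i) + (\<Sum>j=1..d. dl k ((i-1)*d+j) * y j)\<bar> \<le> 1 + real d * Y" for i
  proof -
    have "\<bar>(\<Sum>j=1..d. dl k ((i-1)*d+j) * y j)\<bar> \<le> real (card {1..d}) * (1 * Y)"
      by (intro sum_bound_const abs_mult_le) (auto simp: dl_abs Y)
    then show ?thesis using dl_abs[of k "H*d+i"] by simp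
  qed
  have "\<bar>(\<Sum>i=1..H. dl k (H*(d+1)+i) * \<sigma> (zz d H \<theta> i y)
      + outw d H \<theta> i * \<sigma>' (zz d H \<theta> i y) * (dl k (H*d+i) + (\<Sum>j=1..d. dl k ((i-1)*d+j) * y j)))\<bar>
      \<le> real (card {1..H}) * (1 * S + T * S' * (1 + real d * Y))"
  proof (intro sum_bound_const)
    fix i assume i: "i \<in> {1..H}"
    have "\<bar>dl k (H*(d+1)+i) * \<sigma> (zz d H \<theta> i y)\<bar> \<le> 1 * S"
      by (intro abs_mult_le dl_abs S i)
    moreover have "\<bar>outw d H \<theta> i * \<sigma>' (zz d H \<theta> i y) * (dl k (H*d+i) + (\<Sum>j=1..d. dl k ((i-1)*d+j) * y j))\<bar>
       \<le> T * S' * (1 + real d * Y)"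
      by (intro abs_mult_le inner S' i) (auto simp: outw_def T)
    ultimately show "\<bar>dl k (H*(d+1)+i) * \<sigma> (zz d H \<theta> i y)
      + outw d H \<theta> i * \<sigma>' (zz d H \<theta> i y) * (dl k (H*d+i) + (\<Sum>j=1..d. dl k ((i-1)*d+j) * y j))\<bar>
      \<le> 1 * S + T * S' * (1 + real d * Y)" by (smt (verit))
  qed simp
  then show ?thesis unfolding netD_def using dl_abs[of k "pdim d H"] by simp
qed

lemma zz_meas: "(\<lambda>y. zz d H \<theta> i y) \<in> borel_measurable (leb d)"
  unfolding zz_def
  by (intro borel_measurable_add borel_measurable_sum borel_measurable_times borel_measurable_const coord_meas) auto

lemma net_meas: "\<sigma> \<in> borel_measurable borel \<Longrightarrow> (\<lambda>y. net_act \<sigma> d H \<theta> y) \<in> borel_measurable (leb d)"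
  unfolding net_act_zz
  by (intro borel_measurable_add borel_measurable_sum borel_measurable_times borel_measurable_const
      measurable_compose[OF zz_meas])

lemma netD_meas: "\<sigma> \<in> borel_measurable borel \<Longrightarrow> \<sigma>' \<in> borel_measurable borel \<Longrightarrow>
    (\<lambda>y. netD \<sigma> \<sigma>' d H \<theta> k y) \<in> borel_measurable (leb d)"
  unfolding netD_def
  by (intro borel_measurable_add borel_measurable_sum borel_measurable_times borel_measurable_const
      measurable_compose[OF zz_meas] coord_meas) auto


lemma cont_bound:
  fixes g :: "real \<Rightarrow> real"
  assumes "continuous_on UNIV g"
  shows "\<exists>S. \<forall>u. \<bar>u\<bar> \<le> Z \<longrightarrow> \<bar>g u\<bar> \<le> S"
proof -
  have "compact (g ` {-Z..Z})" by (rule compact_continuous_image) (use assms continuous_on_subset in auto)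
  then obtain S where S: "\<forall>x\<in>g ` {-Z..Z}. norm x \<le> S" using compact_imp_bounded bounded_iff by metis
  have "\<bar>g u\<bar> \<le> S" if "\<bar>u\<bar> \<le> Z" for u
  proof -
    have "u \<in> {-Z..Z}" using that by (auto simp: abs_le_iff)
    then show ?thesis using S by auto
  qed
  then show ?thesis by blast
qed

lemma param_bound: "\<theta> \<in> param_space d H \<Longrightarrow> \<exists>T. \<forall>m. \<bar>\<theta> m\<bar> \<le> T"
proof -
  assume th: "\<theta> \<in> param_space d H"
  have "\<bar>\<theta> m\<bar> \<le> (\<Sum>m\<in>{1..pdim d H}. \<bar>\<theta> m\<bar>)" for m
  proof (cases "m \<in> {1..pdim d H}")
    case True then show ?thesis by (intro member_le_sum) auto
  next
    case False then show ?thesis using th by (simp add: param_space_def sum_nonneg)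
  qed
  then show ?thesis by blast
qed

lemma upd_bound: fixes \<theta> :: "nat \<Rightarrow> real" shows "(\<And>m. \<bar>\<theta> m\<bar> \<le> T) \<Longrightarrow> \<bar>t\<bar> \<le> 1 \<Longrightarrow> \<bar>(\<theta>(k := \<theta> k + t)) m\<bar> \<le> T + 1"
proof -
  assume a: "\<And>m. \<bar>\<theta> m\<bar> \<le> T" "\<bar>t\<bar> \<le> 1"
  show ?thesis
  proof (cases "m = k")
    case True
    have "\<bar>\<theta> k + t\<bar> \<le> \<bar>\<theta> k\<bar> + \<bar>t\<bar>" by arith
    then show ?thesis using a(1)[of k] a(2) True by simp
  next
    case False then show ?thesis using a(1)[of m] by simp
  qed
qed

locale setting =
  fixes d H :: nat and a b :: real and f p :: "(nat \<Rightarrow> real) \<Rightarrow> real" and R R' :: "nat \<Rightarrow> real \<Rightarrow> real"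
  assumes d1: "d \<ge> 1" and H1: "H \<ge> 1" and ab: "a < b"
    and fcont: "continuous_on (cube d a b) f"
    and pmeas: "p \<in> borel_measurable (leb d)"
    and pnn: "\<forall>x\<in>cube d a b. 0 \<le> p x"
    and pbnd: "bounded (p ` cube d a b)"
    and Rder: "\<forall>r\<ge>1. \<forall>x. (R r has_real_derivative R' r x) (at x)"
    and R'cont: "\<forall>r\<ge>1. continuous_on UNIV (R' r)"
    and Rlim: "\<forall>x. (\<lambda>r. \<bar>R r x - max x 0\<bar> + \<bar>R' r x - indicator {0<..} x\<bar>) \<longlonglongrightarrow> 0"
    and R'bnd: "\<forall>x. \<exists>C. \<forall>r\<ge>1. \<forall>y\<in>{-\<bar>x\<bar>..\<bar>x\<bar>}. \<bar>R' r y\<bar> \<le> C"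
begin

definition fc where "fc y = f (clampf d a b y)"
definition YY where "YY = \<bar>a\<bar> + \<bar>b\<bar>"

lemma ab': "a \<le> b" using ab by simp

lemma fc_eq: "y \<in> cube d a b \<Longrightarrow> fc y = f y"
  by (simp add: fc_def clampf_id)

lemma fc_m: "fc \<in> borel_measurable (leb d)"
  unfolding fc_def using fc_meas[OF fcont ab'] .

lemma F_ex: "\<exists>F. \<forall>y\<in>cube d a b. \<bar>fc y\<bar> \<le> F"
  using fc_bounded[OF fcont] fc_eq by auto

lemma P_ex: "\<exists>P. \<forall>y\<in>cube d a b. \<bar>p y\<bar> \<le> P"
  using pbnd unfolding bounded_iff by auto

lemma cubeY: "y \<in> cube d a b \<Longrightarrow> j \<in> {1..d} \<Longrightarrow> \<bar>y j\<bar> \<le> YY"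
proof -
  assume "y \<in> cube d a b" "j \<in> {1..d}"
  then have "a \<le> y j" "y j \<le> b" unfolding cube_def by (auto simp: PiE_iff)
  then show ?thesis unfolding YY_def by linarith
qed

lemma YY_nn: "0 \<le> YY" by (simp add: YY_def)

lemma R_cont: "r \<ge> 1 \<Longrightarrow> continuous_on UNIV (R r)"
  using Rder by (meson DERIV_isCont continuous_at_imp_continuous_on)

lemma R_meas: "r \<ge> 1 \<Longrightarrow> R r \<in> borel_measurable borel"
  using R_cont by (rule borel_measurable_continuous_onI)

lemma R'_meas: "r \<ge> 1 \<Longrightarrow> R' r \<in> borel_measurable borel"
  using R'cont by (simp add: borel_measurable_continuous_onI)

definition Dr where
  "Dr r \<theta> k = (LINT y:cube d a b|leb d. 2 * (net_act (R r) d H \<theta> y - fc y) * netD (R r) (R' r) d H \<theta> k y * p y)"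

lemma risk_eq: "risk_act \<sigma> d H a b f p \<theta> =
   integral\<^sup>L (leb d) (\<lambda>y. indicator (cube d a b) y * ((fc y - net_act \<sigma> d H \<theta> y)^2 * p y))"
  unfolding risk_act_def set_lebesgue_integral_def
  by (intro Bochner_Integration.integral_cong refl) (auto simp: fc_eq split: split_indicator)

lemma risk_deriv:
  assumes r: "r \<ge> 1" and T: "\<And>m. \<bar>\<theta> m\<bar> \<le> T"
  shows "((\<lambda>t. risk_act (R r) d H a b f p (\<theta>(k := \<theta> k + t))) has_real_derivative Dr r \<theta> k) (at 0)"
proof -
  define \<phi> where "\<phi> t y = indicator (cube d a b) y * ((fc y - net_act (R r) d H (\<theta>(k := \<theta> k + t)) y)^2 * p y)" for t y
  define \<phi>' where "\<phi>' t y = indicator (cube d a b) y * (2 * (fc y - net_act (R r) d H (\<theta>(k := \<theta> k + t)) y)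
      * (- netD (R r) (R' r) d H (\<theta>(k := \<theta> k + t)) k y) * p y)" for t y
  obtain F where F: "\<forall>y\<in>cube d a b. \<bar>fc y\<bar> \<le> F" using F_ex by blast
  obtain P where P: "\<forall>y\<in>cube d a b. \<bar>p y\<bar> \<le> P" using P_ex by blast
  define Z where "Z = (T + 1) + real d * ((T + 1) * YY)"
  obtain S where S: "\<And>u. \<bar>u\<bar> \<le> Z \<Longrightarrow> \<bar>R r u\<bar> \<le> S" using cont_bound[OF R_cont[OF r]] by blast
  obtain S' where S': "\<And>u. \<bar>u\<bar> \<le> Z \<Longrightarrow> \<bar>R' r u\<bar> \<le> S'" using cont_bound[of "R' r" Z] R'cont r by blast
  define NB where "NB = (T + 1) + real H * ((T + 1) * S)"
  define DB where "DB = 1 + real H * (S + (T + 1) * S' * (1 + real d * YY))"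
  have zzb: "\<bar>zz d H (\<theta>(k := \<theta> k + t)) i y\<bar> \<le> Z" if "\<bar>t\<bar> \<le> 1" "y \<in> cube d a b" for t i y
    unfolding Z_def by (rule zz_bound[OF upd_bound[OF T that(1)] cubeY[OF that(2)]])
  have Nb: "\<bar>net_act (R r) d H (\<theta>(k := \<theta> k + t)) y\<bar> \<le> NB" if "\<bar>t\<bar> \<le> 1" "y \<in> cube d a b" for t y
    unfolding NB_def by (rule net_bound[OF upd_bound[OF T that(1)]]) (rule S[OF zzb[OF that]])
  have NDb: "\<bar>netD (R r) (R' r) d H (\<theta>(k := \<theta> k + t)) k y\<bar> \<le> DB" if "\<bar>t\<bar> \<le> 1" "y \<in> cube d a b" for t y
    unfolding DB_def by (rule netD_bound[OF upd_bound[OF T that(1)] cubeY[OF that(2)]]) (assumption | rule S S' zzb[OF that])+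
  have meas: "\<phi> t \<in> borel_measurable (leb d)" for t
    unfolding \<phi>_def using cube_sets[of d a b] fc_m pmeas net_meas[OF R_meas[OF r]] by measurable
  have meas': "\<phi>' 0 \<in> borel_measurable (leb d)"
    unfolding \<phi>'_def using cube_sets[of d a b] fc_m pmeas net_meas[OF R_meas[OF r]]
      netD_meas[OF R_meas[OF r] R'_meas[OF r]] by measurable
  have sd: "\<And>x. (R r has_real_derivative R' r x) (at x)" using Rder r by auto
  have der: "((\<lambda>s. \<phi> s y) has_real_derivative \<phi>' t y) (at t)" for y t
  proof -
    have "((\<lambda>s. indicator (cube d a b) y * ((fc y - net_act (R r) d H (\<theta>(k := \<theta> k + s)) y)^2 * p y)) has_real_derivative
       indicator (cube d a b) y * ((2 * (fc y - net_act (R r) d H (\<theta>(k := \<theta> k + t)) y)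
      * (0 - netD (R r) (R' r) d H (\<theta>(k := \<theta> k + t)) k y)) * p y)) (at t)"
      apply (rule DERIV_cong)
       apply (rule DERIV_mult DERIV_const DERIV_power DERIV_diff net_deriv[OF sd])+
      apply (simp add: algebra_simps)
      done
    then show ?thesis unfolding \<phi>_def \<phi>'_def by (simp add: algebra_simps)
  qed
  define B where "B = 2 * (F + NB) * DB * P"
  have bnd: "\<bar>\<phi>' t y\<bar> \<le> indicator (cube d a b) y * B" if "\<bar>t\<bar> \<le> 1" for y t
  proof (cases "y \<in> cube d a b")
    case True
    have "\<bar>2 * (fc y - net_act (R r) d H (\<theta>(k := \<theta> k + t)) y)
      * (- netD (R r) (R' r) d H (\<theta>(k := \<theta> k + t)) k y) * p y\<bar> \<le> 2 * (F + NB) * DB * P"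
      apply (intro abs_mult_le)
      using F P Nb[OF that True] NDb[OF that True] True by auto
    then show ?thesis using True unfolding \<phi>'_def B_def by simp
  qed (simp add: \<phi>'_def)
  have intw: "integrable (leb d) (\<lambda>y. indicator (cube d a b) y * B)"
    by (rule integrable_cube[OF _ _ ab']) auto
  have int0: "integrable (leb d) (\<phi> 0)"
    unfolding \<phi>_def
  proof (rule integrable_cube[OF _ _ ab'])
    show "(\<lambda>y. (fc y - net_act (R r) d H (\<theta>(k := \<theta> k + 0)) y)\<^sup>2 * p y) \<in> borel_measurable (leb d)"
      using fc_m pmeas net_meas[OF R_meas[OF r]] by measurable
    fix y assume y: "y \<in> cube d a b"
    have "\<bar>(fc y - net_act (R r) d H (\<theta>(k := \<theta> k + 0)) y)\<^sup>2 * p y\<bar> \<le> ((F + NB) * (F + NB)) * P"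
      unfolding power2_eq_square
      by (intro abs_mult_le) (use F P Nb[of 0 y] y in auto)
    then show "\<bar>(fc y - net_act (R r) d H (\<theta>(k := \<theta> k + 0)) y)\<^sup>2 * p y\<bar> \<le> ((F + NB) * (F + NB)) * P" .
  qed
  have "((\<lambda>t. integral\<^sup>L (leb d) (\<phi> t)) has_real_derivative integral\<^sup>L (leb d) (\<phi>' 0)) (at 0)"
    by (rule deriv_integral[OF meas meas' der bnd intw int0])
  moreover have "integral\<^sup>L (leb d) (\<phi>' 0) = Dr r \<theta> k"
    unfolding Dr_def set_lebesgue_integral_def \<phi>'_def
    by (intro Bochner_Integration.integral_cong refl) (simp add: algebra_simps)
  moreover have "risk_act (R r) d H a b f p (\<theta>(k := \<theta> k + t)) = integral\<^sup>L (leb d) (\<phi> t)" for t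
    unfolding risk_eq \<phi>_def ..
  ultimately show ?thesis by simp
qed

end


lemma mvt_boundK:
  fixes g g' :: "real \<Rightarrow> real"
  assumes der: "\<And>t. (g has_real_derivative g' t) (at t)"
    and bnd: "\<And>t. \<bar>t\<bar> \<le> K \<Longrightarrow> \<bar>g' t\<bar> \<le> B"
    and s: "\<bar>s\<bar> \<le> K"
  shows "\<bar>g s - g 0\<bar> \<le> B * \<bar>s\<bar>"
proof (cases "s = 0")
  case True then show ?thesis by simp
next
  case False
  show ?thesis
  proof (cases "s > 0")
    case True
    from MVT2[of 0 s g g'] True der obtain z where z: "0 < z" "z < s" "g s - g 0 = (s - 0) * g' z" by auto
    have "\<bar>g' z\<bar> \<le> B" using bnd z s by auto
    then show ?thesis using z True by (simp add: abs_mult mult.commute mult_left_mono)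
  next
    case False
    with \<open>s \<noteq> 0\<close> have "s < 0" by simp
    from MVT2[of s 0 g g'] this der obtain z where z: "s < z" "z < 0" "g 0 - g s = (0 - s) * g' z" by auto
    have "\<bar>g' z\<bar> \<le> B" using bnd z s by auto
    then have "\<bar>g 0 - g s\<bar> \<le> B * \<bar>s\<bar>" using z by (simp add: abs_mult mult.commute mult_left_mono)
    then show ?thesis by simp
  qed
qed

definition relu :: "real \<Rightarrow> real" where "relu x = max x 0"
definition ind :: "real \<Rightarrow> real" where "ind x = indicator {0<..} x"

context setting begin

definition Gf where
  "Gf \<theta> k = (LINT y:cube d a b|leb d. 2 * (net_act relu d H \<theta> y - fc y) * netD relu ind d H \<theta> k y * p y)"

lemma R_lim: "(\<lambda>r. R r x) \<longlonglongrightarrow> relu x"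
proof -
  have "(\<lambda>r. R r x - max x 0) \<longlonglongrightarrow> 0"
    by (rule Lim_null_comparison[OF always_eventually Rlim[rule_format, of x]]) auto
  then show ?thesis unfolding relu_def by (rule LIM_zero_cancel)
qed

lemma R'_lim: "(\<lambda>r. R' r x) \<longlonglongrightarrow> ind x"
proof -
  have "(\<lambda>r. R' r x - indicator {0<..} x) \<longlonglongrightarrow> 0"
    by (rule Lim_null_comparison[OF always_eventually Rlim[rule_format, of x]]) auto
  then show ?thesis unfolding ind_def by (rule LIM_zero_cancel)
qed

lemma unif_bound: "\<exists>S. \<forall>r\<ge>1. \<forall>u. \<bar>u\<bar> \<le> Z \<longrightarrow> \<bar>R r u\<bar> \<le> S \<and> \<bar>R' r u\<bar> \<le> S"
proof -
  obtain C where C: "\<And>r u. r \<ge> 1 \<Longrightarrow> u \<in> {-\<bar>Z\<bar>..\<bar>Z\<bar>} \<Longrightarrow> \<bar>R' r u\<bar> \<le> C" using R'bnd by blast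
  have "convergent (\<lambda>r. R r 0)" using R_lim by (auto simp: convergent_def)
  then obtain C0 where C0: "\<And>r. \<bar>R r 0\<bar> \<le> C0" using convergent_imp_Bseq BseqE by (metis real_norm_def)
  have "\<bar>R r u\<bar> \<le> C0 + C * \<bar>Z\<bar> + C \<and> \<bar>R' r u\<bar> \<le> C0 + C * \<bar>Z\<bar> + C" if r: "r \<ge> 1" and u: "\<bar>u\<bar> \<le> Z" for r u
  proof -
    have C0': "0 \<le> C" using C[OF r, of 0] by auto
    have "\<bar>R r u - R r 0\<bar> \<le> C * \<bar>u\<bar>"
    proof (rule mvt_boundK[of "R r" "R' r" "\<bar>Z\<bar>"])
      show "(R r has_real_derivative R' r t) (at t)" for t using Rder r by simp
      show "\<bar>R' r t\<bar> \<le> C" if "\<bar>t\<bar> \<le> \<bar>Z\<bar>" for t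
        using C[OF r, of t] that by (simp add: abs_le_iff)
      show "\<bar>u\<bar> \<le> \<bar>Z\<bar>" using u by simp
    qed
    also have "\<dots> \<le> C * \<bar>Z\<bar>" using u C0' by (intro mult_left_mono) auto
    finally have 1: "\<bar>R r u\<bar> \<le> C0 + C * \<bar>Z\<bar>" using C0[of r] by linarith
    have "\<bar>R' r u\<bar> \<le> C" using C[OF r, of u] u by (auto simp: abs_le_iff)
    moreover have "0 \<le> C0 + C * \<bar>Z\<bar>" using 1 by linarith
    ultimately show ?thesis using 1 C0' by linarith
  qed
  then show ?thesis by blast
qed

lemma relu_meas: "relu \<in> borel_measurable borel"
  unfolding relu_def by measurable

lemma ind_meas: "ind \<in> borel_measurable borel"
  unfolding ind_def by measurable

lemma Dr_lim:
  assumes T: "\<And>m. \<bar>\<theta> m\<bar> \<le> T"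
  shows "(\<lambda>r. Dr r \<theta> k) \<longlonglongrightarrow> Gf \<theta> k"
proof -
  define s where "s r y = indicator (cube d a b) y * (2 * (net_act (R r) d H \<theta> y - fc y) * netD (R r) (R' r) d H \<theta> k y * p y)" for r y
  define s0 where "s0 y = indicator (cube d a b) y * (2 * (net_act relu d H \<theta> y - fc y) * netD relu ind d H \<theta> k y * p y)" for y
  obtain F where F: "\<forall>y\<in>cube d a b. \<bar>fc y\<bar> \<le> F" using F_ex by blast
  obtain P where P: "\<forall>y\<in>cube d a b. \<bar>p y\<bar> \<le> P" using P_ex by blast
  define Z where "Z = T + real d * (T * YY)"
  obtain S where S: "\<And>r u. r \<ge> 1 \<Longrightarrow> \<bar>u\<bar> \<le> Z \<Longrightarrow> \<bar>R r u\<bar> \<le> S \<and> \<bar>R' r u\<bar> \<le> S" using unif_bound[of Z] by blast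
  define NB where "NB = T + real H * (T * S)"
  define DB where "DB = 1 + real H * (S + T * S * (1 + real d * YY))"
  have zzb: "\<bar>zz d H \<theta> i y\<bar> \<le> Z" if "y \<in> cube d a b" for i y
    unfolding Z_def by (rule zz_bound[OF T cubeY[OF that]])
  have lim: "(\<lambda>n. integral\<^sup>L (leb d) (s (Suc n))) \<longlonglongrightarrow> integral\<^sup>L (leb d) s0"
  proof (rule integral_dominated_convergence[where w="\<lambda>y. indicator (cube d a b) y * (2 * (F + NB) * DB * P)"])
    show "s0 \<in> borel_measurable (leb d)"
      unfolding s0_def using cube_sets[of d a b] fc_m pmeas net_meas[OF relu_meas]
        netD_meas[OF relu_meas ind_meas] by measurable
    show "s (Suc n) \<in> borel_measurable (leb d)" for n
      unfolding s_def using cube_sets[of d a b] fc_m pmeas net_meas[OF R_meas] netD_meas[OF R_meas R'_meas]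
      by measurable
    show "integrable (leb d) (\<lambda>y. indicator (cube d a b) y * (2 * (F + NB) * DB * P))"
      by (rule integrable_cube[OF _ _ ab']) auto
    show "AE y in leb d. (\<lambda>n. s (Suc n) y) \<longlonglongrightarrow> s0 y"
    proof (rule AE_I2)
      fix y
      have N: "(\<lambda>r. net_act (R r) d H \<theta> y) \<longlonglongrightarrow> net_act relu d H \<theta> y"
        unfolding net_act_zz
        apply (rule tendsto_add)
         apply (rule tendsto_const)
        apply (rule tendsto_sum)
        apply (rule tendsto_mult)
         apply (rule tendsto_const)
        apply (rule R_lim)
        done
      have ND: "(\<lambda>r. netD (R r) (R' r) d H \<theta> k y) \<longlonglongrightarrow> netD relu ind d H \<theta> k y"
        unfolding netD_def
        apply (rule tendsto_add, rule tendsto_const, rule tendsto_sum, rule tendsto_add)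
         apply (rule tendsto_mult, rule tendsto_const, rule R_lim)
        apply (rule tendsto_mult, rule tendsto_mult, rule tendsto_const, rule R'_lim, rule tendsto_const)
        done
      have "(\<lambda>r. s r y) \<longlonglongrightarrow> s0 y"
        unfolding s_def s0_def
        apply (rule tendsto_mult, rule tendsto_const, rule tendsto_mult, rule tendsto_mult, rule tendsto_mult)
           apply (rule tendsto_const)
          apply (rule tendsto_diff)
           apply (rule N)
          apply (rule tendsto_const)
         apply (rule ND)
        apply (rule tendsto_const)
        done
      then show "(\<lambda>n. s (Suc n) y) \<longlonglongrightarrow> s0 y" by (rule LIMSEQ_Suc)
    qed
    show "AE y in leb d. norm (s (Suc n) y) \<le> indicator (cube d a b) y * (2 * (F + NB) * DB * P)" for n
    proof (rule AE_I2)
      fix y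
      show "norm (s (Suc n) y) \<le> indicator (cube d a b) y * (2 * (F + NB) * DB * P)"
      proof (cases "y \<in> cube d a b")
        case True
        have r: "Suc n \<ge> 1" by simp
        have Nb: "\<bar>net_act (R (Suc n)) d H \<theta> y\<bar> \<le> NB"
          unfolding NB_def by (rule net_bound[OF T]) (use S[OF r zzb[OF True]] in blast)
        have NDb: "\<bar>netD (R (Suc n)) (R' (Suc n)) d H \<theta> k y\<bar> \<le> DB"
          unfolding DB_def by (rule netD_bound[OF T cubeY[OF True]]) (use S[OF r zzb[OF True]] in blast)+
        have "\<bar>2 * (net_act (R (Suc n)) d H \<theta> y - fc y) * netD (R (Suc n)) (R' (Suc n)) d H \<theta> k y * p y\<bar> \<le> 2 * (F + NB) * DB * P"
        proof (intro abs_mult_le)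
          show "\<bar>2::real\<bar> \<le> 2" by simp
          show "\<bar>net_act (R (Suc n)) d H \<theta> y - fc y\<bar> \<le> F + NB" proof -
            have "\<bar>fc y\<bar> \<le> F" using F True by blast
            then show ?thesis using Nb by arith
          qed
          show "\<bar>netD (R (Suc n)) (R' (Suc n)) d H \<theta> k y\<bar> \<le> DB" by (rule NDb)
          show "\<bar>p y\<bar> \<le> P" using P True by blast
        qed
        then show ?thesis using True unfolding s_def by simp
      qed (simp add: s_def)
    qed
  qed
  have e1: "(\<lambda>n. Dr (Suc n) \<theta> k) = (\<lambda>n. integral\<^sup>L (leb d) (s (Suc n)))"
    unfolding Dr_def s_def set_lebesgue_integral_def by simp
  have e2: "Gf \<theta> k = integral\<^sup>L (leb d) s0"
    unfolding Gf_def s0_def set_lebesgue_integral_def by simp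
  show ?thesis by (rule LIMSEQ_imp_Suc) (unfold e1 e2, rule lim)
qed

end


lemma pd_coord: "m \<in> {1..pdim d H} \<Longrightarrow> \<bar>\<theta>1 m - \<theta>2 m\<bar> \<le> pnorm_dist d H \<theta>1 \<theta>2"
proof -
  assume m: "m \<in> {1..pdim d H}"
  have "(\<theta>1 m - \<theta>2 m)^2 \<le> (\<Sum>k=1..pdim d H. (\<theta>1 k - \<theta>2 k)^2)"
    by (rule member_le_sum) (use m in auto)
  then have "sqrt ((\<theta>1 m - \<theta>2 m)^2) \<le> pnorm_dist d H \<theta>1 \<theta>2"
    unfolding pnorm_dist_def by (rule real_sqrt_le_mono)
  then show ?thesis by simp
qed

lemma pd_nn: "0 \<le> pnorm_dist d H \<theta>1 \<theta>2"
  unfolding pnorm_dist_def by (auto intro: sum_nonneg)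

lemma pd_sym: "pnorm_dist d H \<theta>1 \<theta>2 = pnorm_dist d H \<theta>2 \<theta>1"
  unfolding pnorm_dist_def by (simp add: power2_commute)

definition ULip :: "nat \<Rightarrow> nat \<Rightarrow> real \<Rightarrow> real \<Rightarrow> (nat \<Rightarrow> real) \<Rightarrow> real \<Rightarrow>
    ((nat \<Rightarrow> real) \<Rightarrow> (nat \<Rightarrow> real) \<Rightarrow> real) \<Rightarrow> bool" where
  "ULip d H a b \<theta>0 \<epsilon> h \<longleftrightarrow> (\<exists>L M. \<forall>\<theta>1 \<theta>2. pnorm_dist d H \<theta>0 \<theta>1 < \<epsilon> \<longrightarrow> pnorm_dist d H \<theta>0 \<theta>2 < \<epsilon> \<longrightarrow>
      (\<forall>y\<in>cube d a b. \<bar>h \<theta>1 y - h \<theta>2 y\<bar> \<le> L * pnorm_dist d H \<theta>1 \<theta>2 \<and> \<bar>h \<theta>1 y\<bar> \<le> M))"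

lemma ULipI:
  assumes "\<And>\<theta>1 \<theta>2 y. pnorm_dist d H \<theta>0 \<theta>1 < \<epsilon> \<Longrightarrow> pnorm_dist d H \<theta>0 \<theta>2 < \<epsilon> \<Longrightarrow> y \<in> cube d a b \<Longrightarrow>
      \<bar>h \<theta>1 y - h \<theta>2 y\<bar> \<le> L * pnorm_dist d H \<theta>1 \<theta>2 \<and> \<bar>h \<theta>1 y\<bar> \<le> M"
  shows "ULip d H a b \<theta>0 \<epsilon> h"
  unfolding ULip_def using assms by blast

lemma ULipE:
  assumes "ULip d H a b \<theta>0 \<epsilon> h"
  obtains L M where "0 \<le> L" "0 \<le> M" "\<And>\<theta>1 \<theta>2 y. pnorm_dist d H \<theta>0 \<theta>1 < \<epsilon> \<Longrightarrow> pnorm_dist d H \<theta>0 \<theta>2 < \<epsilon> \<Longrightarrow> y \<in> cube d a b \<Longrightarrow>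
      \<bar>h \<theta>1 y - h \<theta>2 y\<bar> \<le> L * pnorm_dist d H \<theta>1 \<theta>2 \<and> \<bar>h \<theta>1 y\<bar> \<le> M"
proof -
  obtain L M where LM: "\<And>\<theta>1 \<theta>2 y. pnorm_dist d H \<theta>0 \<theta>1 < \<epsilon> \<Longrightarrow> pnorm_dist d H \<theta>0 \<theta>2 < \<epsilon> \<Longrightarrow> y \<in> cube d a b \<Longrightarrow>
      \<bar>h \<theta>1 y - h \<theta>2 y\<bar> \<le> L * pnorm_dist d H \<theta>1 \<theta>2 \<and> \<bar>h \<theta>1 y\<bar> \<le> M"
    using assms unfolding ULip_def by blast
  show ?thesis
  proof (rule that[of "max L 0" "max M 0"])
    fix \<theta>1 \<theta>2 y assume *: "pnorm_dist d H \<theta>0 \<theta>1 < \<epsilon>" "pnorm_dist d H \<theta>0 \<theta>2 < \<epsilon>" "y \<in> cube d a b"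
    have "L * pnorm_dist d H \<theta>1 \<theta>2 \<le> max L 0 * pnorm_dist d H \<theta>1 \<theta>2"
      by (intro mult_right_mono pd_nn) auto
    then show "\<bar>h \<theta>1 y - h \<theta>2 y\<bar> \<le> max L 0 * pnorm_dist d H \<theta>1 \<theta>2 \<and> \<bar>h \<theta>1 y\<bar> \<le> max M 0"
      using LM[OF *] by auto
  qed auto
qed

lemma U_const: "(\<And>y. y \<in> cube d a b \<Longrightarrow> \<bar>c y\<bar> \<le> M) \<Longrightarrow> ULip d H a b \<theta>0 \<epsilon> (\<lambda>\<theta> y. c y)"
  by (rule ULipI[where L=0 and M=M]) auto

lemma U_coord: "m \<in> {1..pdim d H} \<Longrightarrow> ULip d H a b \<theta>0 \<epsilon> (\<lambda>\<theta> y. \<theta> m)"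
proof (rule ULipI[where L=1 and M="\<bar>\<theta>0 m\<bar> + \<epsilon>"])
  fix \<theta>1 \<theta>2 :: "nat \<Rightarrow> real" and y
  assume m: "m \<in> {1..pdim d H}" and "pnorm_dist d H \<theta>0 \<theta>1 < \<epsilon>"
  then have "\<bar>\<theta>0 m - \<theta>1 m\<bar> < \<epsilon>" using pd_coord[OF m, of \<theta>0 \<theta>1] by linarith
  then show "\<bar>\<theta>1 m - \<theta>2 m\<bar> \<le> 1 * pnorm_dist d H \<theta>1 \<theta>2 \<and> \<bar>\<theta>1 m\<bar> \<le> \<bar>\<theta>0 m\<bar> + \<epsilon>"
    using pd_coord[OF m, of \<theta>1 \<theta>2] by auto
qed

lemma U_add: "ULip d H a b \<theta>0 \<epsilon> h1 \<Longrightarrow> ULip d H a b \<theta>0 \<epsilon> h2 \<Longrightarrow> ULip d H a b \<theta>0 \<epsilon> (\<lambda>\<theta> y. h1 \<theta> y + h2 \<theta> y)"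
proof -
  assume "ULip d H a b \<theta>0 \<epsilon> h1" "ULip d H a b \<theta>0 \<epsilon> h2"
  then obtain L1 M1 L2 M2 where
    1: "\<And>\<theta>1 \<theta>2 y. pnorm_dist d H \<theta>0 \<theta>1 < \<epsilon> \<Longrightarrow> pnorm_dist d H \<theta>0 \<theta>2 < \<epsilon> \<Longrightarrow> y \<in> cube d a b \<Longrightarrow>
      \<bar>h1 \<theta>1 y - h1 \<theta>2 y\<bar> \<le> L1 * pnorm_dist d H \<theta>1 \<theta>2 \<and> \<bar>h1 \<theta>1 y\<bar> \<le> M1" and
    2: "\<And>\<theta>1 \<theta>2 y. pnorm_dist d H \<theta>0 \<theta>1 < \<epsilon> \<Longrightarrow> pnorm_dist d H \<theta>0 \<theta>2 < \<epsilon> \<Longrightarrow> y \<in> cube d a b \<Longrightarrow>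
      \<bar>h2 \<theta>1 y - h2 \<theta>2 y\<bar> \<le> L2 * pnorm_dist d H \<theta>1 \<theta>2 \<and> \<bar>h2 \<theta>1 y\<bar> \<le> M2"
    unfolding ULip_def by metis
  show ?thesis
  proof (rule ULipI[where L="L1 + L2" and M="M1 + M2"])
    fix \<theta>1 \<theta>2 y assume *: "pnorm_dist d H \<theta>0 \<theta>1 < \<epsilon>" "pnorm_dist d H \<theta>0 \<theta>2 < \<epsilon>" "y \<in> cube d a b"
    have e: "\<bar>h1 \<theta>1 y + h2 \<theta>1 y - (h1 \<theta>2 y + h2 \<theta>2 y)\<bar> \<le> \<bar>h1 \<theta>1 y - h1 \<theta>2 y\<bar> + \<bar>h2 \<theta>1 y - h2 \<theta>2 y\<bar>"
      by (rule order_trans[OF _ abs_triangle_ineq]) simp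
    have e2: "\<bar>h1 \<theta>1 y + h2 \<theta>1 y\<bar> \<le> \<bar>h1 \<theta>1 y\<bar> + \<bar>h2 \<theta>1 y\<bar>" by (rule abs_triangle_ineq)
    from 1[OF *] 2[OF *] e e2 show "\<bar>h1 \<theta>1 y + h2 \<theta>1 y - (h1 \<theta>2 y + h2 \<theta>2 y)\<bar> \<le> (L1 + L2) * pnorm_dist d H \<theta>1 \<theta>2 \<and>
      \<bar>h1 \<theta>1 y + h2 \<theta>1 y\<bar> \<le> M1 + M2" unfolding distrib_right by linarith
  qed
qed

lemma U_neg: "ULip d H a b \<theta>0 \<epsilon> h \<Longrightarrow> ULip d H a b \<theta>0 \<epsilon> (\<lambda>\<theta> y. - h \<theta> y)"
  unfolding ULip_def by (simp add: abs_minus_commute)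

lemma U_diff: "ULip d H a b \<theta>0 \<epsilon> h1 \<Longrightarrow> ULip d H a b \<theta>0 \<epsilon> h2 \<Longrightarrow> ULip d H a b \<theta>0 \<epsilon> (\<lambda>\<theta> y. h1 \<theta> y - h2 \<theta> y)"
  using U_add[OF _ U_neg, of d H a b \<theta>0 \<epsilon> h1 h2] by simp

lemma prod_lip:
  fixes x1 x2 u1 u2 A B M1 M2 :: real
  assumes "\<bar>x1 - x2\<bar> \<le> A" "\<bar>u1 - u2\<bar> \<le> B" "\<bar>x1\<bar> \<le> M1" "\<bar>u2\<bar> \<le> M2"
  shows "\<bar>x1 * u1 - x2 * u2\<bar> \<le> M1 * B + M2 * A"
proof -
  have e: "x1 * u1 - x2 * u2 = x1 * (u1 - u2) + u2 * (x1 - x2)" by (simp add: algebra_simps)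
  have "\<bar>x1 * (u1 - u2)\<bar> \<le> M1 * B" by (rule abs_mult_le) (use assms in auto)
  moreover have "\<bar>u2 * (x1 - x2)\<bar> \<le> M2 * A" by (rule abs_mult_le) (use assms in auto)
  ultimately show ?thesis unfolding e by (smt (verit))
qed

lemma U_mult: "ULip d H a b \<theta>0 \<epsilon> h1 \<Longrightarrow> ULip d H a b \<theta>0 \<epsilon> h2 \<Longrightarrow> ULip d H a b \<theta>0 \<epsilon> (\<lambda>\<theta> y. h1 \<theta> y * h2 \<theta> y)"
proof -
  assume u1: "ULip d H a b \<theta>0 \<epsilon> h1" and u2: "ULip d H a b \<theta>0 \<epsilon> h2"
  obtain L1 M1 where
    1: "\<forall>\<theta>1 \<theta>2. pnorm_dist d H \<theta>0 \<theta>1 < \<epsilon> \<longrightarrow> pnorm_dist d H \<theta>0 \<theta>2 < \<epsilon> \<longrightarrow>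
      (\<forall>y\<in>cube d a b. \<bar>h1 \<theta>1 y - h1 \<theta>2 y\<bar> \<le> L1 * pnorm_dist d H \<theta>1 \<theta>2 \<and> \<bar>h1 \<theta>1 y\<bar> \<le> M1)"
    using u1 unfolding ULip_def by (elim exE)
  obtain L2 M2 where
    2: "\<forall>\<theta>1 \<theta>2. pnorm_dist d H \<theta>0 \<theta>1 < \<epsilon> \<longrightarrow> pnorm_dist d H \<theta>0 \<theta>2 < \<epsilon> \<longrightarrow>
      (\<forall>y\<in>cube d a b. \<bar>h2 \<theta>1 y - h2 \<theta>2 y\<bar> \<le> L2 * pnorm_dist d H \<theta>1 \<theta>2 \<and> \<bar>h2 \<theta>1 y\<bar> \<le> M2)"
    using u2 unfolding ULip_def by (elim exE)
  note 1 = 1[rule_format] and 2 = 2[rule_format]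
  show ?thesis
  proof (rule ULipI[where L="M1 * L2 + M2 * L1" and M="M1 * M2"])
    fix \<theta>1 \<theta>2 y assume *: "pnorm_dist d H \<theta>0 \<theta>1 < \<epsilon>" "pnorm_dist d H \<theta>0 \<theta>2 < \<epsilon>" "y \<in> cube d a b"
    have sw: "pnorm_dist d H \<theta>0 \<theta>2 < \<epsilon>" "pnorm_dist d H \<theta>0 \<theta>1 < \<epsilon>" "y \<in> cube d a b" using * by auto
    have a1: "\<bar>h1 \<theta>1 y - h1 \<theta>2 y\<bar> \<le> L1 * pnorm_dist d H \<theta>1 \<theta>2" "\<bar>h1 \<theta>1 y\<bar> \<le> M1" using 1[OF *] by auto
    have a2: "\<bar>h2 \<theta>1 y - h2 \<theta>2 y\<bar> \<le> L2 * pnorm_dist d H \<theta>1 \<theta>2" "\<bar>h2 \<theta>1 y\<bar> \<le> M2" using 2[OF *] by auto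
    have a3: "\<bar>h2 \<theta>2 y\<bar> \<le> M2" using 2[OF sw] by auto
    have c1: "\<bar>h1 \<theta>1 y * h2 \<theta>1 y - h1 \<theta>2 y * h2 \<theta>2 y\<bar> \<le> M1 * (L2 * pnorm_dist d H \<theta>1 \<theta>2) + M2 * (L1 * pnorm_dist d H \<theta>1 \<theta>2)"
      by (rule prod_lip[OF a1(1) a2(1) a1(2) a3])
    have c2: "\<bar>h1 \<theta>1 y * h2 \<theta>1 y\<bar> \<le> M1 * M2" by (rule abs_mult_le[OF a1(2) a2(2)])
    show "\<bar>h1 \<theta>1 y * h2 \<theta>1 y - h1 \<theta>2 y * h2 \<theta>2 y\<bar> \<le> (M1 * L2 + M2 * L1) * pnorm_dist d H \<theta>1 \<theta>2 \<and>
        \<bar>h1 \<theta>1 y * h2 \<theta>1 y\<bar> \<le> M1 * M2" using c1 c2 by (simp add: distrib_right mult.assoc)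
  qed
qed

lemma U_sum: "finite A \<Longrightarrow> (\<And>i. i \<in> A \<Longrightarrow> ULip d H a b \<theta>0 \<epsilon> (h i)) \<Longrightarrow> ULip d H a b \<theta>0 \<epsilon> (\<lambda>\<theta> y. \<Sum>i\<in>A. h i \<theta> y)"
proof (induction A rule: finite_induct)
  case empty then show ?case by (simp add: U_const[of d a b "\<lambda>_. 0" 0, simplified])
next
  case (insert x F)
  then show ?case by (simp add: U_add)
qed

lemma U_relu: "ULip d H a b \<theta>0 \<epsilon> h \<Longrightarrow> ULip d H a b \<theta>0 \<epsilon> (\<lambda>\<theta> y. relu (h \<theta> y))"
  unfolding ULip_def relu_def
proof (elim exE, intro exI allI impI ballI)
  fix L M \<theta>1 \<theta>2 y
  assume A: "\<forall>\<theta>1 \<theta>2. pnorm_dist d H \<theta>0 \<theta>1 < \<epsilon> \<longrightarrow> pnorm_dist d H \<theta>0 \<theta>2 < \<epsilon> \<longrightarrow>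
      (\<forall>y\<in>cube d a b. \<bar>h \<theta>1 y - h \<theta>2 y\<bar> \<le> L * pnorm_dist d H \<theta>1 \<theta>2 \<and> \<bar>h \<theta>1 y\<bar> \<le> M)"
    and *: "pnorm_dist d H \<theta>0 \<theta>1 < \<epsilon>" "pnorm_dist d H \<theta>0 \<theta>2 < \<epsilon>" "y \<in> cube d a b"
  then have "\<bar>h \<theta>1 y - h \<theta>2 y\<bar> \<le> L * pnorm_dist d H \<theta>1 \<theta>2 \<and> \<bar>h \<theta>1 y\<bar> \<le> M" by blast
  then show "\<bar>max (h \<theta>1 y) 0 - max (h \<theta>2 y) 0\<bar> \<le> L * pnorm_dist d H \<theta>1 \<theta>2 \<and> \<bar>max (h \<theta>1 y) 0\<bar> \<le> M"
    by (smt (verit))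
qed


lemma abs_int_bound:
  fixes f g :: "'a \<Rightarrow> real"
  assumes "integrable M f" "integrable M g" "\<And>x. x \<in> space M \<Longrightarrow> \<bar>f x\<bar> \<le> g x"
  shows "\<bar>integral\<^sup>L M f\<bar> \<le> integral\<^sup>L M g"
  by (rule order_trans[OF integral_abs_bound integral_mono[OF integrable_abs[OF assms(1)] assms(2) assms(3)]])

lemma idx_w: fixes i j d H :: nat shows "i \<in> {1..H} \<Longrightarrow> j \<in> {1..d} \<Longrightarrow> (i-1)*d+j \<le> H*d"
proof -
  assume i: "i \<in> {1..H}" and j: "j \<in> {1..d}"
  have "(i-1)*d+j \<le> (i-1)*d + d" using j by auto
  also have "\<dots> = i*d" using i by (cases i) auto
  also have "\<dots> \<le> H*d" using i by simp
  finally show ?thesis .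
qed

lemma idx_w': fixes i j d H :: nat shows "i \<in> {1..H} \<Longrightarrow> j \<in> {1..d} \<Longrightarrow> (i-1)*d+j \<in> {1..pdim d H}"
proof -
  assume i: "i \<in> {1..H}" and j: "j \<in> {1..d}"
  have "(i-1)*d+j \<le> H*d" by (rule idx_w[OF i j])
  moreover have "1 \<le> (i-1)*d+j" using j by auto
  ultimately show ?thesis by (auto simp: pdim_def algebra_simps)
qed

lemma idx_b: "i \<in> {1..H} \<Longrightarrow> H*d+i \<in> {1..pdim d H}"
  by (auto simp: pdim_def)

lemma idx_v: "i \<in> {1..H} \<Longrightarrow> H*(d+1)+i \<in> {1..pdim d H}"
  by (auto simp: pdim_def)

lemma idx_c: "pdim d H \<in> {1..pdim d H}"
  by (auto simp: pdim_def)

lemma cube_coord_bound: "y \<in> cube d a b \<Longrightarrow> j \<in> {1..d} \<Longrightarrow> \<bar>y j\<bar> \<le> \<bar>a\<bar> + \<bar>b\<bar>"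
proof -
  assume "y \<in> cube d a b" "j \<in> {1..d}"
  then have "a \<le> y j" "y j \<le> b" unfolding cube_def by (auto simp: PiE_iff)
  then show ?thesis by linarith
qed

lemma U_zz: "i \<in> {1..H} \<Longrightarrow> ULip d H a b \<theta>0 \<epsilon> (\<lambda>\<theta> y. zz d H \<theta> i y)"
  unfolding zz_def bia_def wgt_def
  by (intro U_add U_coord idx_b U_sum U_mult U_const[OF cube_coord_bound] idx_w') auto

lemma U_net: "ULip d H a b \<theta>0 \<epsilon> (\<lambda>\<theta> y. net_act relu d H \<theta> y)"
  unfolding net_act_zz outb_def outw_def
  by (intro U_add U_coord idx_c U_sum U_mult idx_v U_relu U_zz) auto

lemma U_dl: "ULip d H a b \<theta>0 \<epsilon> (\<lambda>\<theta> y. dl k m)"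
  by (rule U_const[of d a b _ 1]) (simp add: dl_abs)

context setting begin

lemma U_fc: "ULip d H a b \<theta>0 \<epsilon> (\<lambda>\<theta> y. fc y)"
  using F_ex U_const by metis

lemma mu_cube: "measure (leb d) (cube d a b) = (b - a)^d"
  using emeasure_cube[OF ab'] ab' by (simp add: measure_def)

lemma int_lip:
  assumes U: "ULip d H a b \<theta>0 \<epsilon> h" and m: "\<And>\<theta>. (\<lambda>y. h \<theta> y) \<in> borel_measurable (leb d)"
  shows "\<exists>L. \<forall>\<theta>1 \<theta>2. pnorm_dist d H \<theta>0 \<theta>1 < \<epsilon> \<longrightarrow> pnorm_dist d H \<theta>0 \<theta>2 < \<epsilon> \<longrightarrow>
     \<bar>(LINT y:cube d a b|leb d. h \<theta>1 y * p y) - (LINT y:cube d a b|leb d. h \<theta>2 y * p y)\<bar> \<le> L * pnorm_dist d H \<theta>1 \<theta>2"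
proof -
  obtain L M where LM: "\<forall>\<theta>1 \<theta>2. pnorm_dist d H \<theta>0 \<theta>1 < \<epsilon> \<longrightarrow> pnorm_dist d H \<theta>0 \<theta>2 < \<epsilon> \<longrightarrow>
      (\<forall>y\<in>cube d a b. \<bar>h \<theta>1 y - h \<theta>2 y\<bar> \<le> L * pnorm_dist d H \<theta>1 \<theta>2 \<and> \<bar>h \<theta>1 y\<bar> \<le> M)"
    using U unfolding ULip_def by (elim exE)
  note LM = LM[rule_format]
  obtain P where P: "\<forall>y\<in>cube d a b. \<bar>p y\<bar> \<le> P" using P_ex by blast
  have "\<bar>(LINT y:cube d a b|leb d. h \<theta>1 y * p y) - (LINT y:cube d a b|leb d. h \<theta>2 y * p y)\<bar> \<le> (L * P * (b-a)^d) * pnorm_dist d H \<theta>1 \<theta>2"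
    if t: "pnorm_dist d H \<theta>0 \<theta>1 < \<epsilon>" "pnorm_dist d H \<theta>0 \<theta>2 < \<epsilon>" for \<theta>1 \<theta>2
  proof -
    have sw: "pnorm_dist d H \<theta>0 \<theta>2 < \<epsilon>" "pnorm_dist d H \<theta>0 \<theta>1 < \<epsilon>" using t by auto
    have i1: "integrable (leb d) (\<lambda>y. indicator (cube d a b) y * (h \<theta>1 y * p y))"
      by (rule integrable_cube[OF _ _ ab', where B="M * P"]) (use m pmeas LM[OF t] P in \<open>auto intro!: abs_mult_le\<close>)
    have i2: "integrable (leb d) (\<lambda>y. indicator (cube d a b) y * (h \<theta>2 y * p y))"
      by (rule integrable_cube[OF _ _ ab', where B="M * P"]) (use m pmeas LM[OF sw] P in \<open>auto intro!: abs_mult_le\<close>)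
    define c where "c = L * pnorm_dist d H \<theta>1 \<theta>2 * P"
    have "(LINT y:cube d a b|leb d. h \<theta>1 y * p y) - (LINT y:cube d a b|leb d. h \<theta>2 y * p y)
        = integral\<^sup>L (leb d) (\<lambda>y. indicator (cube d a b) y * (h \<theta>1 y * p y) - indicator (cube d a b) y * (h \<theta>2 y * p y))"
      unfolding set_lebesgue_integral_def using i1 i2 by simp
    also have "\<bar>\<dots>\<bar> \<le> integral\<^sup>L (leb d) (\<lambda>y. indicator (cube d a b) y * c)"
    proof (rule abs_int_bound)
      show "integrable (leb d) (\<lambda>y. indicator (cube d a b) y * (h \<theta>1 y * p y) - indicator (cube d a b) y * (h \<theta>2 y * p y))"
        using i1 i2 by simp
      show "integrable (leb d) (\<lambda>y. indicator (cube d a b) y * c)"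
        by (rule integrable_cube[OF _ _ ab']) auto
      fix y
      show "\<bar>indicator (cube d a b) y * (h \<theta>1 y * p y) - indicator (cube d a b) y * (h \<theta>2 y * p y)\<bar> \<le> indicator (cube d a b) y * c"
      proof (cases "y \<in> cube d a b")
        case True
        have "\<bar>(h \<theta>1 y - h \<theta>2 y) * p y\<bar> \<le> (L * pnorm_dist d H \<theta>1 \<theta>2) * P"
          by (rule abs_mult_le) (use LM[OF t True] P True in auto)
        then show ?thesis using True unfolding c_def by (simp add: left_diff_distrib)
      qed simp
    qed
    also have "\<dots> = c * (b - a)^d"
      using mu_cube cube_sets[of d a b] by (simp add: mult.commute)
    finally show ?thesis unfolding c_def by (simp add: algebra_simps)
  qed
  then show ?thesis by blast
qed

end


lemma slab_measure:
  fixes w :: "nat \<Rightarrow> real" and c \<eta> :: real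
  assumes j0: "j0 \<in> {1..d}" and w0: "w j0 \<noteq> 0" and \<eta>: "0 \<le> \<eta>" and ab: "a \<le> b"
  defines "S \<equiv> {y \<in> cube d a b. \<bar>c + (\<Sum>j=1..d. w j * y j)\<bar> \<le> \<eta>}"
  shows "S \<in> sets (leb d)" "measure (leb d) S \<le> 2 * (\<eta> / \<bar>w j0\<bar>) * (b - a)^(d - 1)"
proof -
  define M where "M = PiM {1..d} (\<lambda>_::nat. lborel :: real measure)"
  define I where "I = {1..d} - {j0}"
  have dI: "{1..d} = insert j0 I" "j0 \<notin> I" "finite I" using j0 by (auto simp: I_def)
  have SM: "S \<in> sets M"
  proof -
    have "S = cube d a b \<inter> {y \<in> space M. \<bar>c + (\<Sum>j=1..d. w j * y j)\<bar> \<le> \<eta>}"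
      unfolding S_def M_def by (auto simp: space_PiM cube_def PiE_iff extensional_def)
    also have "\<dots> \<in> sets M"
      unfolding M_def using cube_sets_PiM[of d a b] by measurable
    finally show ?thesis .
  qed
  then show "S \<in> sets (leb d)" unfolding leb_def M_def by auto
  define r where "r = \<eta> / \<bar>w j0\<bar>"
  have r: "0 \<le> r" unfolding r_def using \<eta> by auto
  define A where "A = PiE I (\<lambda>_. {a..b::real})"
  define u where "u x = - (c + (\<Sum>j\<in>I. w j * x j)) / w j0" for x :: "nat \<Rightarrow> real"
  have ptw: "indicator S (x(j0 := t)) \<le> (indicator A x * indicator {u x - r .. u x + r} t :: ennreal)"
    if x: "x \<in> space (PiM I (\<lambda>_. lborel))" for x t
  proof (cases "x(j0 := t) \<in> S")
    case True
    then have c1: "x(j0 := t) \<in> cube d a b" and c2: "\<bar>c + (\<Sum>j=1..d. w j * (x(j0 := t)) j)\<bar> \<le> \<eta>"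
      unfolding S_def by auto
    have "x \<in> A" using c1 x dI(2) unfolding A_def cube_def I_def
      by (auto simp: PiE_iff space_PiM split: if_splits)
    have "(\<Sum>j=1..d. w j * (x(j0 := t)) j) = w j0 * t + (\<Sum>j\<in>I. w j * (x(j0 := t)) j)"
      unfolding dI(1) using dI(2,3) by simp
    also have "(\<Sum>j\<in>I. w j * (x(j0 := t)) j) = (\<Sum>j\<in>I. w j * x j)"
      using dI(2) by (intro sum.cong) auto
    finally have "c + (\<Sum>j=1..d. w j * (x(j0 := t)) j) = w j0 * (t - u x)"
      unfolding u_def using w0 by (simp add: field_simps)
    then have "\<bar>w j0\<bar> * \<bar>t - u x\<bar> \<le> \<eta>" using c2 by (simp add: abs_mult)
    then have "\<bar>t - u x\<bar> \<le> r" unfolding r_def using w0 by (simp add: field_simps mult.commute)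
    then have "t \<in> {u x - r .. u x + r}" by (auto simp: abs_le_iff)
    then show ?thesis using \<open>x \<in> A\<close> True by simp
  qed simp
  have "emeasure M S = (\<integral>\<^sup>+ y. indicator S y \<partial>M)" using SM by simp
  also have "\<dots> = (\<integral>\<^sup>+ x. (\<integral>\<^sup>+ t. indicator S (x(j0 := t)) \<partial>lborel) \<partial>(PiM I (\<lambda>_. lborel)))"
  proof -
    have SM': "S \<in> sets (PiM (insert j0 I) (\<lambda>_. lborel))" using SM unfolding M_def dI(1) .
    show ?thesis unfolding M_def dI(1)
      by (intro lbp.product_nn_integral_insert dI(2,3) borel_measurable_indicator SM')
  qed
  also have "\<dots> \<le> (\<integral>\<^sup>+ x. (\<integral>\<^sup>+ t. indicator A x * indicator {u x - r .. u x + r} t \<partial>lborel) \<partial>(PiM I (\<lambda>_. lborel)))"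
    by (intro nn_integral_mono ptw) auto
  also have "\<dots> = (\<integral>\<^sup>+ x. ennreal (2 * r) * indicator A x \<partial>(PiM I (\<lambda>_. lborel)))"
    using r by (intro nn_integral_cong) (simp add: nn_integral_cmult_indicator mult.commute)
  also have "\<dots> = ennreal (2 * r) * emeasure (PiM I (\<lambda>_. lborel)) A"
    by (rule nn_integral_cmult_indicator) (auto simp: A_def intro!: sets_PiM_I_finite dI(3))
  also have "emeasure (PiM I (\<lambda>_. lborel)) A = ennreal ((b - a)^(d - 1))"
  proof -
    have "card I = d - 1" unfolding I_def using j0 by (simp add: card_Diff_singleton)
    then show ?thesis unfolding A_def using dI(3) ab
      by (simp add: lbp.emeasure_PiM prod_ennreal ennreal_power)
  qed
  finally have "emeasure M S \<le> ennreal (2 * r * (b - a)^(d - 1))"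
    using r ab by (simp add: ennreal_mult)
  then have "measure M S \<le> 2 * r * (b - a)^(d - 1)"
    unfolding measure_def using r ab by (intro enn2real_leI) auto
  then show "measure (leb d) S \<le> 2 * (\<eta> / \<bar>w j0\<bar>) * (b - a)^(d - 1)"
    unfolding leb_def M_def r_def using SM unfolding M_def by simp
qed


lemma zz_diff:
  assumes i: "i \<in> {1..H}" and y: "y \<in> cube d a b"
  shows "\<bar>zz d H \<theta>1 i y - zz d H \<theta>2 i y\<bar> \<le> (1 + real d * (\<bar>a\<bar> + \<bar>b\<bar>)) * pnorm_dist d H \<theta>1 \<theta>2"
proof -
  let ?p = "pnorm_dist d H \<theta>1 \<theta>2"
  have "zz d H \<theta>1 i y - zz d H \<theta>2 i y = (bia d H \<theta>1 i - bia d H \<theta>2 i) + (\<Sum>j=1..d. (wgt d \<theta>1 i j - wgt d \<theta>2 i j) * y j)"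
    unfolding zz_def by (simp add: sum_subtractf left_diff_distrib)
  also have "\<bar>\<dots>\<bar> \<le> \<bar>bia d H \<theta>1 i - bia d H \<theta>2 i\<bar> + \<bar>\<Sum>j=1..d. (wgt d \<theta>1 i j - wgt d \<theta>2 i j) * y j\<bar>"
    by (rule abs_triangle_ineq)
  also have "\<dots> \<le> ?p + real (card {1..d}) * (?p * (\<bar>a\<bar> + \<bar>b\<bar>))"
  proof (rule add_mono)
    show "\<bar>bia d H \<theta>1 i - bia d H \<theta>2 i\<bar> \<le> ?p" unfolding bia_def by (rule pd_coord[OF idx_b[OF i]])
    show "\<bar>\<Sum>j=1..d. (wgt d \<theta>1 i j - wgt d \<theta>2 i j) * y j\<bar> \<le> real (card {1..d}) * (?p * (\<bar>a\<bar> + \<bar>b\<bar>))"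
    proof (rule sum_bound_const)
      fix j assume j: "j \<in> {1..d}"
      show "\<bar>(wgt d \<theta>1 i j - wgt d \<theta>2 i j) * y j\<bar> \<le> ?p * (\<bar>a\<bar> + \<bar>b\<bar>)"
        by (rule abs_mult_le) (use pd_coord[OF idx_w'[OF i j]] cube_coord_bound[OF y j] in \<open>auto simp: wgt_def\<close>)
    qed simp
  qed
  also have "\<dots> = (1 + real d * (\<bar>a\<bar> + \<bar>b\<bar>)) * ?p" by (simp add: algebra_simps)
  finally show ?thesis .
qed

lemma ind_diff_le: "\<bar>ind u - ind v\<bar> \<le> (if \<bar>u\<bar> \<le> \<bar>u - v\<bar> then 1 else 0)"
  by (cases "u > 0"; cases "v > 0") (auto simp: ind_def)

context setting begin

lemma ind_zz_meas: "(\<lambda>y. ind (zz d H \<theta> i y)) \<in> borel_measurable (leb d)"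
  using measurable_compose[OF zz_meas ind_meas] by simp

lemma ind_lip:
  assumes i0: "i0 \<in> {1..H}" and nd: "i0 \<notin> degenerate d H \<theta>0"
  shows "\<exists>\<epsilon>>0. \<exists>K. \<forall>\<theta>1 \<theta>2. pnorm_dist d H \<theta>0 \<theta>1 < \<epsilon> \<longrightarrow> pnorm_dist d H \<theta>0 \<theta>2 < \<epsilon> \<longrightarrow>
     integral\<^sup>L (leb d) (\<lambda>y. indicator (cube d a b) y * \<bar>ind (zz d H \<theta>1 i0 y) - ind (zz d H \<theta>2 i0 y)\<bar>) \<le> K * pnorm_dist d H \<theta>1 \<theta>2"
proof -
  define Kx where "Kx = 1 + real d * (\<bar>a\<bar> + \<bar>b\<bar>)"
  have Kx: "Kx \<ge> 1" unfolding Kx_def by simp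
  have ndd: "bia d H \<theta>0 i0 \<noteq> 0 \<or> (\<exists>j\<in>{1..d}. wgt d \<theta>0 i0 j \<noteq> 0)"
  proof (rule ccontr)
    assume "\<not> ?thesis"
    then have "\<bar>bia d H \<theta>0 i0\<bar> + (\<Sum>j=1..d. \<bar>wgt d \<theta>0 i0 j\<bar>) = 0" by auto
    then show False using nd i0 unfolding degenerate_def by auto
  qed
  show ?thesis
  proof (cases "\<exists>j\<in>{1..d}. wgt d \<theta>0 i0 j \<noteq> 0")
    case True
    then obtain j0 where j0: "j0 \<in> {1..d}" and w0: "wgt d \<theta>0 i0 j0 \<noteq> 0" by blast
    define \<epsilon> where "\<epsilon> = \<bar>wgt d \<theta>0 i0 j0\<bar> / 2"
    define K where "K = 4 * Kx / \<bar>wgt d \<theta>0 i0 j0\<bar> * (b - a)^(d - 1)"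
    have "integral\<^sup>L (leb d) (\<lambda>y. indicator (cube d a b) y * \<bar>ind (zz d H \<theta>1 i0 y) - ind (zz d H \<theta>2 i0 y)\<bar>) \<le> K * pnorm_dist d H \<theta>1 \<theta>2"
      if t: "pnorm_dist d H \<theta>0 \<theta>1 < \<epsilon>" "pnorm_dist d H \<theta>0 \<theta>2 < \<epsilon>" for \<theta>1 \<theta>2
    proof -
      let ?p = "pnorm_dist d H \<theta>1 \<theta>2"
      have "\<bar>wgt d \<theta>0 i0 j0 - wgt d \<theta>1 i0 j0\<bar> \<le> pnorm_dist d H \<theta>0 \<theta>1"
        unfolding wgt_def by (rule pd_coord[OF idx_w'[OF i0 j0]])
      then have w1: "\<bar>wgt d \<theta>1 i0 j0\<bar> \<ge> \<bar>wgt d \<theta>0 i0 j0\<bar> / 2" using t(1) unfolding \<epsilon>_def by linarith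
      then have w1': "wgt d \<theta>1 i0 j0 \<noteq> 0" using w0 by auto
      define S where "S = {y \<in> cube d a b. \<bar>bia d H \<theta>1 i0 + (\<Sum>j=1..d. wgt d \<theta>1 i0 j * y j)\<bar> \<le> Kx * ?p}"
      have Kp: "0 \<le> Kx * ?p" using Kx pd_nn[of d H \<theta>1 \<theta>2] by simp
      have Ss: "S \<in> sets (leb d)" and Sm: "measure (leb d) S \<le> 2 * (Kx * ?p / \<bar>wgt d \<theta>1 i0 j0\<bar>) * (b - a)^(d - 1)"
        using slab_measure[where w="wgt d \<theta>1 i0" and c="bia d H \<theta>1 i0" and \<eta>="Kx * ?p" and d=d and a=a and b=b, OF j0 w1' Kp ab'] unfolding S_def by auto
      have Sc: "S \<subseteq> cube d a b" unfolding S_def by auto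
      have intS: "integrable (leb d) (indicator S :: _ \<Rightarrow> real)"
      proof -
        have "integrable (leb d) (\<lambda>y. indicator (cube d a b) y * (indicator S y :: real))"
          by (rule integrable_cube[OF _ _ ab', where B=1]) (use Ss in auto)
        moreover have "(\<lambda>y. indicator (cube d a b) y * (indicator S y :: real)) = (indicator S :: _ \<Rightarrow> real)"
          using Sc by (auto simp: fun_eq_iff split: split_indicator)
        ultimately show ?thesis by simp
      qed
      have "integral\<^sup>L (leb d) (\<lambda>y. indicator (cube d a b) y * \<bar>ind (zz d H \<theta>1 i0 y) - ind (zz d H \<theta>2 i0 y)\<bar>)
          \<le> integral\<^sup>L (leb d) (indicator S)"
      proof (rule integral_mono[OF _ intS])
        show "integrable (leb d) (\<lambda>y. indicator (cube d a b) y * \<bar>ind (zz d H \<theta>1 i0 y) - ind (zz d H \<theta>2 i0 y)\<bar>)"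
          by (rule integrable_cube[OF _ _ ab', where B=1]) (use ind_zz_meas in \<open>auto simp: ind_def split: split_indicator\<close>)
        fix y
        show "indicator (cube d a b) y * \<bar>ind (zz d H \<theta>1 i0 y) - ind (zz d H \<theta>2 i0 y)\<bar> \<le> indicator S y"
        proof (cases "y \<in> cube d a b")
          case True
          have zd: "\<bar>zz d H \<theta>1 i0 y - zz d H \<theta>2 i0 y\<bar> \<le> Kx * ?p" unfolding Kx_def by (rule zz_diff[OF i0 True])
          show ?thesis
          proof (cases "\<bar>zz d H \<theta>1 i0 y\<bar> \<le> \<bar>zz d H \<theta>1 i0 y - zz d H \<theta>2 i0 y\<bar>")
            case True2: True
            then have "y \<in> S" using zd True unfolding S_def zz_def by auto
            then show ?thesis using True by (auto simp: ind_def split: split_indicator)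
          next
            case False
            then show ?thesis using ind_diff_le[of "zz d H \<theta>1 i0 y" "zz d H \<theta>2 i0 y"] True
              by (simp split: split_indicator)
          qed
        qed simp
      qed
      also have "\<dots> = measure (leb d) S" using Ss sets.sets_into_space by (simp add: Int_absorb2)
      also have "\<dots> \<le> 2 * (Kx * ?p / \<bar>wgt d \<theta>1 i0 j0\<bar>) * (b - a)^(d - 1)" by (rule Sm)
      also have "\<dots> \<le> 2 * (Kx * ?p / (\<bar>wgt d \<theta>0 i0 j0\<bar> / 2)) * (b - a)^(d - 1)"
        using w1 w0 Kp ab' by (intro mult_right_mono mult_left_mono divide_left_mono) auto
      also have "\<dots> = K * ?p" unfolding K_def by (simp add: field_simps)
      finally show ?thesis .
    qed
    moreover have "\<epsilon> > 0" unfolding \<epsilon>_def using w0 by simp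
    ultimately show ?thesis by blast
  next
    case False
    then have w0: "\<And>j. j \<in> {1..d} \<Longrightarrow> wgt d \<theta>0 i0 j = 0" by auto
    with ndd have b0: "bia d H \<theta>0 i0 \<noteq> 0" by auto
    define \<beta> where "\<beta> = bia d H \<theta>0 i0"
    define \<epsilon> where "\<epsilon> = \<bar>\<beta>\<bar> / (2 * Kx)"
    have eps: "\<epsilon> > 0" unfolding \<epsilon>_def \<beta>_def using b0 Kx by auto
    have z0: "zz d H \<theta>0 i0 y = \<beta>" for y unfolding zz_def \<beta>_def using w0 by simp
    have sgn: "(zz d H \<theta>1 i0 y > 0) = (\<beta> > 0)" if t: "pnorm_dist d H \<theta>0 \<theta>1 < \<epsilon>" and y: "y \<in> cube d a b" for \<theta>1 y
    proof -
      have "\<bar>zz d H \<theta>1 i0 y - \<beta>\<bar> \<le> Kx * pnorm_dist d H \<theta>1 \<theta>0"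
        using zz_diff[OF i0 y, of \<theta>1 \<theta>0] unfolding Kx_def z0 .
      also have "\<dots> < Kx * \<epsilon>" using t Kx by (simp add: pd_sym)
      also have "\<dots> = \<bar>\<beta>\<bar> / 2" unfolding \<epsilon>_def using Kx by simp
      finally show ?thesis by (auto simp: abs_if split: if_splits)
    qed
    have "integral\<^sup>L (leb d) (\<lambda>y. indicator (cube d a b) y * \<bar>ind (zz d H \<theta>1 i0 y) - ind (zz d H \<theta>2 i0 y)\<bar>) \<le> 0 * pnorm_dist d H \<theta>1 \<theta>2"
      if t: "pnorm_dist d H \<theta>0 \<theta>1 < \<epsilon>" "pnorm_dist d H \<theta>0 \<theta>2 < \<epsilon>" for \<theta>1 \<theta>2
    proof -
      have "(\<lambda>y. indicator (cube d a b) y * \<bar>ind (zz d H \<theta>1 i0 y) - ind (zz d H \<theta>2 i0 y)\<bar>) = (\<lambda>y. 0)"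
      proof
        fix y show "indicator (cube d a b) y * \<bar>ind (zz d H \<theta>1 i0 y) - ind (zz d H \<theta>2 i0 y)\<bar> = 0"
        proof (cases "y \<in> cube d a b")
          case True
          then show ?thesis using sgn[OF t(1) True] sgn[OF t(2) True] by (simp add: ind_def split: split_indicator)
        qed simp
      qed
      then show ?thesis by simp
    qed
    then show ?thesis using eps by blast
  qed
qed

end


lemma idx_inj:
  fixes i i0 j j0 d :: nat
  assumes "i \<ge> 1" "i0 \<ge> 1" "j \<in> {1..d}" "j0 \<in> {1..d}" "(i-1)*d+j = (i0-1)*d+j0"
  shows "i = i0 \<and> j = j0"
proof -
  have lt: False if "i < i0" "(i-1)*d+j = (i0-1)*d+j0" "j \<in> {1..d}" "j0 \<in> {1..d}" "i \<ge> 1" for i i0 j j0 :: nat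
  proof -
    have "(i-1)*d+j \<le> (i-1)*d + d" using that by auto
    also have "\<dots> = i*d" using that by (cases i) auto
    also have "\<dots> \<le> (i0-1)*d" using that by (intro mult_right_mono) auto
    also have "\<dots> < (i0-1)*d+j0" using that by auto
    finally show False using that by simp
  qed
  have "i = i0"
  proof (rule ccontr)
    assume "i \<noteq> i0"
    then have "i < i0 \<or> i0 < i" by auto
    then show False using lt[of i i0 j j0] lt[of i0 i j0 j] assms by auto
  qed
  then show ?thesis using assms by auto
qed

lemma netD_vc:
  assumes "H*d + H < k" "k \<le> pdim d H"
  shows "netD \<sigma> \<sigma>' d H \<theta> k y = dl k (pdim d H) + (\<Sum>i=1..H. dl k (H*(d+1)+i) * \<sigma> (zz d H \<theta> i y))"
  unfolding netD_def
proof (intro arg_cong2[where f="(+)"] refl sum.cong)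
  fix i assume i: "i \<in> {1..H}"
  have "dl k (H*d+i) = 0" using assms i by (auto simp: dl_def)
  moreover have "(\<Sum>j=1..d. dl k ((i-1)*d+j) * y j) = 0"
    using idx_w[OF i] assms by (intro sum.neutral) (force simp: dl_def)
  ultimately show "dl k (H*(d+1)+i) * \<sigma> (zz d H \<theta> i y)
      + outw d H \<theta> i * \<sigma>' (zz d H \<theta> i y) * (dl k (H*d+i) + (\<Sum>j=1..d. dl k ((i-1)*d+j) * y j))
      = dl k (H*(d+1)+i) * \<sigma> (zz d H \<theta> i y)" by simp
qed

lemma netD_w:
  assumes i0: "i0 \<in> {1..H}" and j0: "j0 \<in> {1..d}" and k: "k = (i0-1)*d+j0"
  shows "netD \<sigma> \<sigma>' d H \<theta> k y = outw d H \<theta> i0 * \<sigma>' (zz d H \<theta> i0 y) * y j0"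
proof -
  have kle: "k \<le> H*d" using idx_w[OF i0 j0] k by simp
  have "dl k (pdim d H) = 0" using kle by (auto simp: dl_def pdim_def)
  moreover have "(\<Sum>i=1..H. dl k (H*(d+1)+i) * \<sigma> (zz d H \<theta> i y)
      + outw d H \<theta> i * \<sigma>' (zz d H \<theta> i y) * (dl k (H*d+i) + (\<Sum>j=1..d. dl k ((i-1)*d+j) * y j)))
      = (\<Sum>i=1..H. if i = i0 then outw d H \<theta> i0 * \<sigma>' (zz d H \<theta> i0 y) * y j0 else 0)"
  proof (intro sum.cong refl)
    fix i assume i: "i \<in> {1..H}"
    have "dl k (H*(d+1)+i) = 0" "dl k (H*d+i) = 0" using kle i by (auto simp: dl_def algebra_simps)
    moreover have "(\<Sum>j=1..d. dl k ((i-1)*d+j) * y j) = (if i = i0 then y j0 else 0)"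
    proof (cases "i = i0")
      case True
      have "(\<Sum>j=1..d. dl k ((i-1)*d+j) * y j) = (\<Sum>j=1..d. if j = j0 then y j else 0)"
        using True k by (intro sum.cong refl) (auto simp: dl_def)
      then show ?thesis using True j0 by simp
    next
      case False
      have "(\<Sum>j=1..d. dl k ((i-1)*d+j) * y j) = 0"
      proof (intro sum.neutral ballI)
        fix j assume j: "j \<in> {1..d}"
        have "(i-1)*d+j \<noteq> k" using idx_inj[of i i0 j d j0] i i0 j j0 k False by auto
        then show "dl k ((i-1)*d+j) * y j = 0" by (simp add: dl_def)
      qed
      then show ?thesis using False by simp
    qed
    ultimately show "dl k (H*(d+1)+i) * \<sigma> (zz d H \<theta> i y)
      + outw d H \<theta> i * \<sigma>' (zz d H \<theta> i y) * (dl k (H*d+i) + (\<Sum>j=1..d. dl k ((i-1)*d+j) * y j))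
      = (if i = i0 then outw d H \<theta> i0 * \<sigma>' (zz d H \<theta> i0 y) * y j0 else 0)" by auto
  qed
  ultimately show ?thesis unfolding netD_def using i0 by simp
qed

lemma netD_b:
  assumes i0: "i0 \<in> {1..H}" and k: "k = H*d+i0"
  shows "netD \<sigma> \<sigma>' d H \<theta> k y = outw d H \<theta> i0 * \<sigma>' (zz d H \<theta> i0 y)"
proof -
  have "dl k (pdim d H) = 0" using k i0 by (auto simp: dl_def pdim_def)
  moreover have "(\<Sum>i=1..H. dl k (H*(d+1)+i) * \<sigma> (zz d H \<theta> i y)
      + outw d H \<theta> i * \<sigma>' (zz d H \<theta> i y) * (dl k (H*d+i) + (\<Sum>j=1..d. dl k ((i-1)*d+j) * y j)))
      = (\<Sum>i=1..H. if i = i0 then outw d H \<theta> i0 * \<sigma>' (zz d H \<theta> i0 y) else 0)"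
  proof (intro sum.cong refl)
    fix i assume i: "i \<in> {1..H}"
    have "dl k (H*(d+1)+i) = 0" using k i i0 by (auto simp: dl_def algebra_simps)
    moreover have "dl k (H*d+i) = (if i = i0 then 1 else 0)" using k by (auto simp: dl_def)
    moreover have "(\<Sum>j=1..d. dl k ((i-1)*d+j) * y j) = 0"
      using idx_w[OF i] k i0 by (intro sum.neutral) (force simp: dl_def)
    ultimately show "dl k (H*(d+1)+i) * \<sigma> (zz d H \<theta> i y)
      + outw d H \<theta> i * \<sigma>' (zz d H \<theta> i y) * (dl k (H*d+i) + (\<Sum>j=1..d. dl k ((i-1)*d+j) * y j))
      = (if i = i0 then outw d H \<theta> i0 * \<sigma>' (zz d H \<theta> i0 y) else 0)" by auto
  qed
  ultimately show ?thesis unfolding netD_def using i0 by simp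
qed


context setting begin

lemma lip_ind:
  assumes U: "\<And>\<epsilon>. ULip d H a b \<theta>0 \<epsilon> A" and m: "\<And>\<theta>. (\<lambda>y. A \<theta> y) \<in> borel_measurable (leb d)"
    and i0: "i0 \<in> {1..H}" and nd: "i0 \<notin> degenerate d H \<theta>0"
  shows "\<exists>\<epsilon>>0. \<exists>L. \<forall>\<theta>1 \<theta>2. pnorm_dist d H \<theta>0 \<theta>1 < \<epsilon> \<longrightarrow> pnorm_dist d H \<theta>0 \<theta>2 < \<epsilon> \<longrightarrow>
     \<bar>(LINT y:cube d a b|leb d. A \<theta>1 y * ind (zz d H \<theta>1 i0 y) * p y) - (LINT y:cube d a b|leb d. A \<theta>2 y * ind (zz d H \<theta>2 i0 y) * p y)\<bar>
       \<le> L * pnorm_dist d H \<theta>1 \<theta>2"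
proof -
  obtain \<epsilon> K where eps: "\<epsilon> > 0" and K: "\<And>\<theta>1 \<theta>2. pnorm_dist d H \<theta>0 \<theta>1 < \<epsilon> \<Longrightarrow> pnorm_dist d H \<theta>0 \<theta>2 < \<epsilon> \<Longrightarrow>
     integral\<^sup>L (leb d) (\<lambda>y. indicator (cube d a b) y * \<bar>ind (zz d H \<theta>1 i0 y) - ind (zz d H \<theta>2 i0 y)\<bar>) \<le> K * pnorm_dist d H \<theta>1 \<theta>2"
    using ind_lip[OF i0 nd] by blast
  obtain L M where LM: "\<forall>\<theta>1 \<theta>2. pnorm_dist d H \<theta>0 \<theta>1 < \<epsilon> \<longrightarrow> pnorm_dist d H \<theta>0 \<theta>2 < \<epsilon> \<longrightarrow>
      (\<forall>y\<in>cube d a b. \<bar>A \<theta>1 y - A \<theta>2 y\<bar> \<le> L * pnorm_dist d H \<theta>1 \<theta>2 \<and> \<bar>A \<theta>1 y\<bar> \<le> M)"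
    using U[of \<epsilon>] unfolding ULip_def by (elim exE)
  note LM = LM[rule_format]
  obtain P where P: "\<forall>y\<in>cube d a b. \<bar>p y\<bar> \<le> P" using P_ex by blast
  have indb: "\<bar>ind u\<bar> \<le> 1" for u by (simp add: ind_def)
  have "\<bar>(LINT y:cube d a b|leb d. A \<theta>1 y * ind (zz d H \<theta>1 i0 y) * p y) - (LINT y:cube d a b|leb d. A \<theta>2 y * ind (zz d H \<theta>2 i0 y) * p y)\<bar>
       \<le> (P * L * (b - a)^d + P * M * K) * pnorm_dist d H \<theta>1 \<theta>2"
    if t: "pnorm_dist d H \<theta>0 \<theta>1 < \<epsilon>" "pnorm_dist d H \<theta>0 \<theta>2 < \<epsilon>" for \<theta>1 \<theta>2
  proof -
    let ?p = "pnorm_dist d H \<theta>1 \<theta>2"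
    have sw: "pnorm_dist d H \<theta>0 \<theta>2 < \<epsilon>" "pnorm_dist d H \<theta>0 \<theta>1 < \<epsilon>" using t by auto
    have mi: "(\<lambda>y. A \<theta> y * ind (zz d H \<theta> i0 y) * p y) \<in> borel_measurable (leb d)" for \<theta>
      using m ind_zz_meas pmeas by measurable
    have i1: "integrable (leb d) (\<lambda>y. indicator (cube d a b) y * (A \<theta>1 y * ind (zz d H \<theta>1 i0 y) * p y))"
    proof (rule integrable_cube[OF mi _ ab', where B="M * 1 * P"])
      fix y assume y: "y \<in> cube d a b"
      show "\<bar>A \<theta>1 y * ind (zz d H \<theta>1 i0 y) * p y\<bar> \<le> M * 1 * P"
        by (intro abs_mult_le indb) (use LM[OF t y] P y in auto)
    qed
    have i2: "integrable (leb d) (\<lambda>y. indicator (cube d a b) y * (A \<theta>2 y * ind (zz d H \<theta>2 i0 y) * p y))"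
    proof (rule integrable_cube[OF mi _ ab', where B="M * 1 * P"])
      fix y assume y: "y \<in> cube d a b"
      show "\<bar>A \<theta>2 y * ind (zz d H \<theta>2 i0 y) * p y\<bar> \<le> M * 1 * P"
        by (intro abs_mult_le indb) (use LM[OF sw y] P y in auto)
    qed
    define g where "g y = indicator (cube d a b) y * \<bar>ind (zz d H \<theta>1 i0 y) - ind (zz d H \<theta>2 i0 y)\<bar>" for y
    have ig: "integrable (leb d) g"
      unfolding g_def by (rule integrable_cube[OF _ _ ab', where B=1]) (use ind_zz_meas in \<open>auto simp: ind_def split: split_indicator\<close>)
    have ic: "integrable (leb d) (\<lambda>y. indicator (cube d a b) y * (P * L * ?p))"
      by (rule integrable_cube[OF _ _ ab']) auto
    have "\<bar>(LINT y:cube d a b|leb d. A \<theta>1 y * ind (zz d H \<theta>1 i0 y) * p y) - (LINT y:cube d a b|leb d. A \<theta>2 y * ind (zz d H \<theta>2 i0 y) * p y)\<bar>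
        = \<bar>integral\<^sup>L (leb d) (\<lambda>y. indicator (cube d a b) y * (A \<theta>1 y * ind (zz d H \<theta>1 i0 y) * p y) - indicator (cube d a b) y * (A \<theta>2 y * ind (zz d H \<theta>2 i0 y) * p y))\<bar>"
      unfolding set_lebesgue_integral_def using i1 i2 by simp
    also have "\<dots> \<le> integral\<^sup>L (leb d) (\<lambda>y. indicator (cube d a b) y * (P * L * ?p) + (P * M) * g y)"
    proof (rule abs_int_bound)
      show "integrable (leb d) (\<lambda>y. indicator (cube d a b) y * (A \<theta>1 y * ind (zz d H \<theta>1 i0 y) * p y) - indicator (cube d a b) y * (A \<theta>2 y * ind (zz d H \<theta>2 i0 y) * p y))"
        using i1 i2 by simp
      show "integrable (leb d) (\<lambda>y. indicator (cube d a b) y * (P * L * ?p) + (P * M) * g y)"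
        using ic ig by simp
      fix y
      show "\<bar>indicator (cube d a b) y * (A \<theta>1 y * ind (zz d H \<theta>1 i0 y) * p y) - indicator (cube d a b) y * (A \<theta>2 y * ind (zz d H \<theta>2 i0 y) * p y)\<bar>
          \<le> indicator (cube d a b) y * (P * L * ?p) + (P * M) * g y"
      proof (cases "y \<in> cube d a b")
        case True
        let ?I1 = "ind (zz d H \<theta>1 i0 y)" and ?I2 = "ind (zz d H \<theta>2 i0 y)"
        have e: "A \<theta>1 y * ?I1 * p y - A \<theta>2 y * ?I2 * p y = ((A \<theta>1 y - A \<theta>2 y) * ?I1 + A \<theta>2 y * (?I1 - ?I2)) * p y"
          by (simp add: algebra_simps)
        have b1: "\<bar>(A \<theta>1 y - A \<theta>2 y) * ?I1\<bar> \<le> (L * ?p) * 1"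
          by (intro abs_mult_le indb) (use LM[OF t True] in auto)
        have b2: "\<bar>A \<theta>2 y * (?I1 - ?I2)\<bar> \<le> M * \<bar>?I1 - ?I2\<bar>"
          by (intro abs_mult_le) (use LM[OF sw True] in auto)
        have "\<bar>(A \<theta>1 y - A \<theta>2 y) * ?I1 + A \<theta>2 y * (?I1 - ?I2)\<bar> \<le> L * ?p + M * \<bar>?I1 - ?I2\<bar>"
          using b1 b2 by (smt (verit))
        then have "\<bar>((A \<theta>1 y - A \<theta>2 y) * ?I1 + A \<theta>2 y * (?I1 - ?I2)) * p y\<bar> \<le> (L * ?p + M * \<bar>?I1 - ?I2\<bar>) * P"
          by (intro abs_mult_le) (use P True in auto)
        then have "\<bar>A \<theta>1 y * ?I1 * p y - A \<theta>2 y * ?I2 * p y\<bar> \<le> (L * ?p + M * \<bar>?I1 - ?I2\<bar>) * P"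
          by (simp only: e)
        also have "\<dots> = P * L * ?p + P * M * \<bar>?I1 - ?I2\<bar>" by (simp add: algebra_simps)
        finally show ?thesis using True unfolding g_def by simp
      qed (simp add: g_def)
    qed
    also have "\<dots> = P * L * ?p * (b - a)^d + (P * M) * integral\<^sup>L (leb d) g"
      using ic ig mu_cube cube_sets[of d a b] by (simp add: mult.commute)
    also have "\<dots> \<le> P * L * ?p * (b - a)^d + (P * M) * (K * ?p)"
    proof -
      have "\<bar>p (clampf d a b undefined)\<bar> \<le> P" using P clampf_cube[OF ab'] by blast
      then have "0 \<le> P" by linarith
      moreover have "\<bar>A \<theta>1 (clampf d a b undefined)\<bar> \<le> M" using LM[OF t clampf_cube[OF ab']] by blast
      then have "0 \<le> M" by linarith
      ultimately show ?thesis using K[OF t] unfolding g_def by (intro add_left_mono mult_left_mono) auto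
    qed
    also have "\<dots> = (P * L * (b - a)^d + P * M * K) * ?p" by (simp add: algebra_simps)
    finally show ?thesis .
  qed
  then show ?thesis using eps by blast
qed

end


context setting begin

lemma Gf_meas_parts:
  "(\<lambda>y. net_act relu d H \<theta> y) \<in> borel_measurable (leb d)"
  "(\<lambda>y. netD relu ind d H \<theta> k y) \<in> borel_measurable (leb d)"
  using net_meas[OF relu_meas] netD_meas[OF relu_meas ind_meas] by auto

lemma part_vc:
  assumes k: "H*d + H < k" "k \<le> pdim d H"
  shows "\<exists>\<epsilon>>0. \<exists>L. \<forall>\<theta>1 \<theta>2. pnorm_dist d H \<theta>0 \<theta>1 < \<epsilon> \<longrightarrow> pnorm_dist d H \<theta>0 \<theta>2 < \<epsilon> \<longrightarrow>
     \<bar>Gf \<theta>1 k - Gf \<theta>2 k\<bar> \<le> L * pnorm_dist d H \<theta>1 \<theta>2"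
proof -
  define h where "h \<theta> y = 2 * (net_act relu d H \<theta> y - fc y) * netD relu ind d H \<theta> k y" for \<theta> y
  have hU: "ULip d H a b \<theta>0 1 h"
  proof -
    have "ULip d H a b \<theta>0 1 (\<lambda>\<theta> y. 2 * (net_act relu d H \<theta> y - fc y) *
        (dl k (pdim d H) + (\<Sum>i=1..H. dl k (H*(d+1)+i) * relu (zz d H \<theta> i y))))"
      by (intro U_mult U_const[of d a b "\<lambda>_. 2" 2] U_diff U_net U_fc U_add U_dl U_sum U_relu U_zz) auto
    moreover have "h = (\<lambda>\<theta> y. 2 * (net_act relu d H \<theta> y - fc y) *
        (dl k (pdim d H) + (\<Sum>i=1..H. dl k (H*(d+1)+i) * relu (zz d H \<theta> i y))))"
      unfolding h_def using netD_vc[OF k] by (simp add: fun_eq_iff)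
    ultimately show ?thesis by simp
  qed
  have hm: "(\<lambda>y. h \<theta> y) \<in> borel_measurable (leb d)" for \<theta>
    unfolding h_def using Gf_meas_parts fc_m by measurable
  have "Gf \<theta> k = (LINT y:cube d a b|leb d. h \<theta> y * p y)" for \<theta> unfolding Gf_def h_def ..
  then show ?thesis using int_lip[OF hU hm] by (intro exI[of _ 1]) auto
qed

lemma part_ind:
  assumes i0: "i0 \<in> {1..H}" and nd: "i0 \<notin> degenerate d H \<theta>0"
    and q: "\<And>y. y \<in> cube d a b \<Longrightarrow> \<bar>q y\<bar> \<le> Q" "q \<in> borel_measurable (leb d)"
    and eq: "\<And>\<theta> y. netD relu ind d H \<theta> k y = outw d H \<theta> i0 * ind (zz d H \<theta> i0 y) * q y"
  shows "\<exists>\<epsilon>>0. \<exists>L. \<forall>\<theta>1 \<theta>2. pnorm_dist d H \<theta>0 \<theta>1 < \<epsilon> \<longrightarrow> pnorm_dist d H \<theta>0 \<theta>2 < \<epsilon> \<longrightarrow>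
     \<bar>Gf \<theta>1 k - Gf \<theta>2 k\<bar> \<le> L * pnorm_dist d H \<theta>1 \<theta>2"
proof -
  define A where "A \<theta> y = 2 * (net_act relu d H \<theta> y - fc y) * outw d H \<theta> i0 * q y" for \<theta> y
  have AU: "ULip d H a b \<theta>0 \<epsilon> A" for \<epsilon>
    unfolding A_def outw_def
    by (intro U_mult U_const[of d a b "\<lambda>_. 2" 2] U_diff U_net U_fc U_coord idx_v[OF i0] U_const[of d a b q Q] q) auto
  have Am: "(\<lambda>y. A \<theta> y) \<in> borel_measurable (leb d)" for \<theta>
    unfolding A_def using Gf_meas_parts fc_m q(2) by measurable
  have "Gf \<theta> k = (LINT y:cube d a b|leb d. A \<theta> y * ind (zz d H \<theta> i0 y) * p y)" for \<theta>
    unfolding Gf_def A_def eq by (simp add: algebra_simps)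
  then show ?thesis using lip_ind[OF AU Am i0 nd] by simp
qed

lemma part_w:
  assumes i0: "i0 \<in> {1..H}" and j0: "j0 \<in> {1..d}" and nd: "i0 \<notin> degenerate d H \<theta>0"
  shows "\<exists>\<epsilon>>0. \<exists>L. \<forall>\<theta>1 \<theta>2. pnorm_dist d H \<theta>0 \<theta>1 < \<epsilon> \<longrightarrow> pnorm_dist d H \<theta>0 \<theta>2 < \<epsilon> \<longrightarrow>
     \<bar>Gf \<theta>1 ((i0-1)*d+j0) - Gf \<theta>2 ((i0-1)*d+j0)\<bar> \<le> L * pnorm_dist d H \<theta>1 \<theta>2"
  by (rule part_ind[OF i0 nd, where q="\<lambda>y. y j0" and Q="\<bar>a\<bar> + \<bar>b\<bar>"])
     (auto simp: netD_w[OF i0 j0] cube_coord_bound[OF _ j0] coord_meas[OF j0])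

lemma part_b:
  assumes i0: "i0 \<in> {1..H}" and nd: "i0 \<notin> degenerate d H \<theta>0"
  shows "\<exists>\<epsilon>>0. \<exists>L. \<forall>\<theta>1 \<theta>2. pnorm_dist d H \<theta>0 \<theta>1 < \<epsilon> \<longrightarrow> pnorm_dist d H \<theta>0 \<theta>2 < \<epsilon> \<longrightarrow>
     \<bar>Gf \<theta>1 (H*d+i0) - Gf \<theta>2 (H*d+i0)\<bar> \<le> L * pnorm_dist d H \<theta>1 \<theta>2"
  by (rule part_ind[OF i0 nd, where q="\<lambda>y. 1" and Q=1]) (auto simp: netD_b[OF i0])

end


lemma loc_lip_transfer:
  assumes eq: "\<And>\<theta>. \<theta> \<in> S \<Longrightarrow> Gk \<theta> = F \<theta>"
    and L: "\<And>\<theta>0. \<theta>0 \<in> S \<Longrightarrow> \<exists>\<epsilon>>0. \<exists>L. \<forall>\<theta>1 \<theta>2. pnorm_dist d H \<theta>0 \<theta>1 < \<epsilon> \<longrightarrow> pnorm_dist d H \<theta>0 \<theta>2 < \<epsilon> \<longrightarrow>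
       \<bar>F \<theta>1 - F \<theta>2\<bar> \<le> L * pnorm_dist d H \<theta>1 \<theta>2"
  shows "loc_lipschitz d H S Gk"
  unfolding loc_lipschitz_def
proof
  fix \<theta>0 assume th: "\<theta>0 \<in> S"
  obtain \<epsilon> L where "\<epsilon> > 0" "\<forall>\<theta>1 \<theta>2. pnorm_dist d H \<theta>0 \<theta>1 < \<epsilon> \<longrightarrow> pnorm_dist d H \<theta>0 \<theta>2 < \<epsilon> \<longrightarrow>
       \<bar>F \<theta>1 - F \<theta>2\<bar> \<le> L * pnorm_dist d H \<theta>1 \<theta>2" using L[OF th] by blast
  then show "\<exists>\<epsilon>>0. \<exists>L. \<forall>\<theta>1\<in>S. \<forall>\<theta>2\<in>S. pnorm_dist d H \<theta>0 \<theta>1 < \<epsilon> \<longrightarrow> pnorm_dist d H \<theta>0 \<theta>2 < \<epsilon> \<longrightarrow>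
        \<bar>Gk \<theta>1 - Gk \<theta>2\<bar> \<le> L * pnorm_dist d H \<theta>1 \<theta>2"
    using eq by (intro exI[of _ \<epsilon>] exI[of _ L]) auto
qed

theorem corollary2p7:
  fixes d H :: nat and a b :: real
    and f p :: "(nat \<Rightarrow> real) \<Rightarrow> real"
    and R R' :: "nat \<Rightarrow> real \<Rightarrow> real"
    and G :: "(nat \<Rightarrow> real) \<Rightarrow> nat \<Rightarrow> real"
  assumes "d \<ge> 1" and "H \<ge> 1" and "a < b"
    and "continuous_on (cube d a b) f"
    and "p \<in> borel_measurable (leb d)"
    and "\<forall>x\<in>cube d a b. 0 \<le> p x"
    and "bounded (p ` cube d a b)"
    and "\<forall>r\<ge>1. \<forall>x. (R r has_real_derivative R' r x) (at x)"
    and "\<forall>r\<ge>1. continuous_on UNIV (R' r)"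
    and "\<forall>x. (\<lambda>r. \<bar>R r x - max x 0\<bar> + \<bar>R' r x - indicator {0<..} x\<bar>) \<longlonglongrightarrow> 0"
    and "\<forall>x. \<exists>C. \<forall>r\<ge>1. \<forall>y\<in>{-\<bar>x\<bar>..\<bar>x\<bar>}. \<bar>R' r y\<bar> \<le> C"
    and "\<forall>\<theta>\<in>param_space d H. \<forall>D g.
           ((\<forall>r\<ge>1. \<forall>k\<in>{1..pdim d H}.
               ((\<lambda>t. risk_act (R r) d H a b f p (\<theta>(k := \<theta> k + t))) has_real_derivative D r k) (at 0))
            \<and> (\<forall>k\<in>{1..pdim d H}. (\<lambda>r. D r k) \<longlonglongrightarrow> g k))
           \<longrightarrow> (\<forall>k\<in>{1..pdim d H}. G \<theta> k = g k)"
  shows "(\<forall>k. H * d + H < k \<and> k \<le> pdim d H \<longrightarrow>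
            loc_lipschitz d H (param_space d H) (\<lambda>\<theta>. G \<theta> k))
       \<and> (\<forall>i\<in>{1..H}. \<forall>j\<in>{1..d}.
            loc_lipschitz d H {\<theta>\<in>param_space d H. i \<notin> degenerate d H \<theta>}
              (\<lambda>\<theta>. G \<theta> ((i - 1) * d + j)))
       \<and> (\<forall>i\<in>{1..H}.
            loc_lipschitz d H {\<theta>\<in>param_space d H. i \<notin> degenerate d H \<theta>}
              (\<lambda>\<theta>. G \<theta> (H * d + i)))"
proof -
  interpret S: setting d H a b f p R R'
    by (unfold_locales) (use assms in auto)
  have Geq: "G \<theta> k = S.Gf \<theta> k" if th: "\<theta> \<in> param_space d H" and k: "k \<in> {1..pdim d H}" for \<theta> k
  proof -
    obtain T where T: "\<And>m. \<bar>\<theta> m\<bar> \<le> T" using param_bound[OF th] by blast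
    have H1: "\<forall>r\<ge>1. \<forall>k\<in>{1..pdim d H}.
        ((\<lambda>t. risk_act (R r) d H a b f p (\<theta>(k := \<theta> k + t))) has_real_derivative S.Dr r \<theta> k) (at 0)"
      using S.risk_deriv[where \<theta>=\<theta> and T=T, OF _ T] by blast
    have H2: "\<forall>k\<in>{1..pdim d H}. (\<lambda>r. S.Dr r \<theta> k) \<longlonglongrightarrow> S.Gf \<theta> k"
      using S.Dr_lim[where \<theta>=\<theta> and T=T, OF T] by blast
    have "\<forall>k\<in>{1..pdim d H}. G \<theta> k = S.Gf \<theta> k"
      using assms(12)[THEN bspec, OF th, THEN spec[of _ "\<lambda>r k. S.Dr r \<theta> k"], THEN spec[of _ "\<lambda>k. S.Gf \<theta> k"]] H1 H2
      by blast
    then show ?thesis using k by blast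
  qed
  show ?thesis
  proof (intro conjI allI impI ballI)
    fix k assume k: "H * d + H < k \<and> k \<le> pdim d H"
    then have kk: "k \<in> {1..pdim d H}" by auto
    show "loc_lipschitz d H (param_space d H) (\<lambda>\<theta>. G \<theta> k)"
      by (rule loc_lip_transfer[where F="\<lambda>\<theta>. S.Gf \<theta> k"]) (use Geq kk S.part_vc k in auto)
  next
    fix i j assume i: "i \<in> {1..H}" and j: "j \<in> {1..d}"
    show "loc_lipschitz d H {\<theta> \<in> param_space d H. i \<notin> degenerate d H \<theta>} (\<lambda>\<theta>. G \<theta> ((i - 1) * d + j))"
      by (rule loc_lip_transfer[where F="\<lambda>\<theta>. S.Gf \<theta> ((i - 1) * d + j)"])
         (use Geq idx_w'[OF i j] S.part_w[OF i j] in auto)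
  next
    fix i assume i: "i \<in> {1..H}"
    show "loc_lipschitz d H {\<theta> \<in> param_space d H. i \<notin> degenerate d H \<theta>} (\<lambda>\<theta>. G \<theta> (H * d + i))"
      by (rule loc_lip_transfer[where F="\<lambda>\<theta>. S.Gf \<theta> (H * d + i)"])
         (use Geq idx_b[OF i] S.part_b[OF i] in auto)
  qed
qed


end
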